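(* Let $\mathbb Y=\mathbb R^m$, $g\colon\mathbb X\to\mathbb R^m$ twice continuously differentiable, $D\subset\mathbb R^m$ closed and polyhedral locally around $g(\bar x)$, $\Phi(x):=g(x)-D$, $(\bar x,0)\in\operatorname{gph}\Phi$, $u\in\mathbb S_{\mathbb X}$. Write $K:=\mathcal N_{\mathcal T_D(g(\bar x))}(\nabla g(\bar x)u)$. Assume: if $\nabla g(\bar x)^*y^*=0$, $\nabla^2\langle y^*,g\rangle(\bar x)(u)+\nabla g(\bar x)^*z^*=0$, $y^*\in K$, $z^*\in\mathcal T_K(y^* )$, then $y^*=0$. Consider the system (S'): $x^*=\nabla^2\langle y^*,g\rangle(\bar x)(u)+\nabla g(\bar x)^*z^*$, $y^*\in K\cap\ker\nabla g(\bar x)^*$, $z^*\in\mathcal T_K(y^* )$. (i) If for every $x^*\in\mathbb X$, $y^*,z^*\in\mathbb R^m$ satisfying (S') there is $\lambda\in\mathcal N_D(g(\bar x))$ with $x^*=\nabla g(\bar x)^*\lambda$, then $\Phi$ is asymptotically regular at $(\bar x,0)$ in direction $u$. (ii) If for every such $x^*,y^*,z^*$ there is $\lambda\in K$ with $x^*=\nabla g(\bar x)^*\lambda$, then $\Phi$ is strongly asymptotically regular at $(\bar x,0)$ in direction $u$.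
   Context: $D$ is polyhedral locally around $y$ if $D\cap V$ is a finite union of convex polyhedra for some neighbourhood $V$ of $y$. $\mathcal T_Q(z)$ is the Bouligand tangent cone, $\mathcal N_Q(z)$ the limiting normal cone (for convex $Q$ the usual normal cone). $\nabla^2\langle y^*,g\rangle(\bar x)(u)$ is the Hessian of $x\mapsto\langle y^*,g(x)\rangle$ at $\bar x$ applied to $u$. (Strong) asymptotic regularity in direction $u$ at $(\bar x,\bar y)$: for all $\{(x_k,y_k)\}\subset\operatorname{gph}\Phi$, $\{x_k^*\}$, $\{\lambda_k\}$, $x^*,y^*$ with $x_k\notin\Phi^{-1}(\bar y)$, $y_k\ne\bar y$, $x_k^*\in\widehat D^*\Phi(x_k,y_k)(\lambda_k)$ (regular coderivative), $x_k\to\bar x$, $y_k\to\bar y$, $x_k^*\to x^*$, $(x_k-\bar x)/\|x_k-\bar x\|\to u$, $(y_k-\bar y)/\|x_k-\bar x\|\to0$, $\|\lambda_k\|\to\infty$, $(y_k-\bar y)/\|y_k-\bar y\|-\lambda_k/\|\lambda_k\|\to0$, $(\|y_k-\bar y\|/\|x_k-\bar x\|)\lambda_k\to y^*$, one has $x^*\in\operatorname{Im}D^*\Phi(\bar x,\bar y)$ (limiting coderivative; resp. $x^*\in\operatorname{Im}D^*\Phi((\bar x,\bar y);(u,0))$, directional limiting coderivative, for strong), $\operatorname{Im}\Psi=\bigcup_z\Psi(z)$. *)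

theory Defs
  imports "HOL-Analysis.Analysis"
begin

definition locally_polyhedral :: "'a::euclidean_space set \<Rightarrow> 'a \<Rightarrow> bool" where
  "locally_polyhedral D y \<longleftrightarrow>
     (\<exists>V F. y \<in> interior V \<and> finite F \<and> (\<forall>P\<in>F. polyhedron P) \<and> D \<inter> V = \<Union>F)"

definition tangent_cone :: "'a::real_normed_vector set \<Rightarrow> 'a \<Rightarrow> 'a set" where
  "tangent_cone Q z = {d. z \<in> Q \<and> (\<exists>t dk. (\<forall>k. t k > 0) \<and> t \<longlonglongrightarrow> 0 \<and> dk \<longlonglongrightarrow> d
        \<and> (\<forall>k. z + t k *\<^sub>R dk k \<in> Q))}"

definition regular_normal_cone :: "'a::real_inner set \<Rightarrow> 'a \<Rightarrow> 'a set" where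
  "regular_normal_cone Q z = {v. z \<in> Q \<and> (\<forall>e>0. \<exists>\<delta>>0. \<forall>z'\<in>Q. norm (z' - z) < \<delta> \<longrightarrow>
        inner v (z' - z) \<le> e * norm (z' - z))}"

definition limiting_normal_cone :: "'a::real_inner set \<Rightarrow> 'a \<Rightarrow> 'a set" where
  "limiting_normal_cone Q z = {v. z \<in> Q \<and> (\<exists>zk vk. (\<forall>k. zk k \<in> Q) \<and> zk \<longlonglongrightarrow> z \<and> vk \<longlonglongrightarrow> v
        \<and> (\<forall>k. vk k \<in> regular_normal_cone Q (zk k)))}"

definition dir_limiting_normal_cone :: "'a::real_inner set \<Rightarrow> 'a \<Rightarrow> 'a \<Rightarrow> 'a set" where
  "dir_limiting_normal_cone Q z d = {v. z \<in> Q \<and> (\<exists>t dk vk. (\<forall>k. t k > 0) \<and> t \<longlonglongrightarrow> 0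
        \<and> dk \<longlonglongrightarrow> d \<and> vk \<longlonglongrightarrow> v
        \<and> (\<forall>k. vk k \<in> regular_normal_cone Q (z + t k *\<^sub>R dk k)))}"

definition gph :: "('a \<Rightarrow> 'b set) \<Rightarrow> ('a \<times> 'b) set" where
  "gph \<Phi> = {(x, y). y \<in> \<Phi> x}"

definition regular_coderiv ::
  "('a::real_inner \<Rightarrow> 'b::real_inner set) \<Rightarrow> 'a \<Rightarrow> 'b \<Rightarrow> 'b \<Rightarrow> 'a set" where
  "regular_coderiv \<Phi> x y l = {xs. (xs, - l) \<in> regular_normal_cone (gph \<Phi>) (x, y)}"

definition limiting_coderiv ::
  "('a::real_inner \<Rightarrow> 'b::real_inner set) \<Rightarrow> 'a \<Rightarrow> 'b \<Rightarrow> 'b \<Rightarrow> 'a set" where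
  "limiting_coderiv \<Phi> x y l = {xs. (xs, - l) \<in> limiting_normal_cone (gph \<Phi>) (x, y)}"

definition dir_limiting_coderiv ::
  "('a::real_inner \<Rightarrow> 'b::real_inner set) \<Rightarrow> 'a \<Rightarrow> 'b \<Rightarrow> 'a \<Rightarrow> 'b \<Rightarrow> 'b \<Rightarrow> 'a set" where
  "dir_limiting_coderiv \<Phi> x y u v l =
     {xs. (xs, - l) \<in> dir_limiting_normal_cone (gph \<Phi>) (x, y) (u, v)}"

definition Im :: "('c \<Rightarrow> 'a set) \<Rightarrow> 'a set" where
  "Im \<Psi> = (\<Union>z. \<Psi> z)"

definition asym_limit ::
  "('a::real_inner \<Rightarrow> 'b::real_inner set) \<Rightarrow> 'a \<Rightarrow> 'b \<Rightarrow> 'a \<Rightarrow> 'a \<Rightarrow> bool" where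
  "asym_limit \<Phi> xb yb u xs \<longleftrightarrow>
     (\<exists>(xk::nat \<Rightarrow> 'a) (yk::nat \<Rightarrow> 'b) (xsk::nat \<Rightarrow> 'a) (lk::nat \<Rightarrow> 'b) (ys::'b).
        (\<forall>k. (xk k, yk k) \<in> gph \<Phi>) \<and>
        (\<forall>k. yb \<notin> \<Phi> (xk k)) \<and>
        (\<forall>k. yk k \<noteq> yb) \<and>
        (\<forall>k. xsk k \<in> regular_coderiv \<Phi> (xk k) (yk k) (lk k)) \<and>
        xk \<longlonglongrightarrow> xb \<and> yk \<longlonglongrightarrow> yb \<and> xsk \<longlonglongrightarrow> xs \<and>
        (\<lambda>k. (1 / norm (xk k - xb)) *\<^sub>R (xk k - xb)) \<longlonglongrightarrow> u \<and>
        (\<lambda>k. (1 / norm (xk k - xb)) *\<^sub>R (yk k - yb)) \<longlonglongrightarrow> 0 \<and>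
        filterlim (\<lambda>k. norm (lk k)) at_top sequentially \<and>
        (\<lambda>k. (1 / norm (yk k - yb)) *\<^sub>R (yk k - yb) - (1 / norm (lk k)) *\<^sub>R lk k) \<longlonglongrightarrow> 0 \<and>
        (\<lambda>k. (norm (yk k - yb) / norm (xk k - xb)) *\<^sub>R lk k) \<longlonglongrightarrow> ys)"

definition asymptotically_regular ::
  "('a::real_inner \<Rightarrow> 'b::real_inner set) \<Rightarrow> 'a \<Rightarrow> 'b \<Rightarrow> 'a \<Rightarrow> bool" where
  "asymptotically_regular \<Phi> xb yb u \<longleftrightarrow>
     (\<forall>xs. asym_limit \<Phi> xb yb u xs \<longrightarrow> xs \<in> Im (limiting_coderiv \<Phi> xb yb))"

definition strongly_asymptotically_regular ::
  "('a::real_inner \<Rightarrow> 'b::real_inner set) \<Rightarrow> 'a \<Rightarrow> 'b \<Rightarrow> 'a \<Rightarrow> bool" where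
  "strongly_asymptotically_regular \<Phi> xb yb u \<longleftrightarrow>
     (\<forall>xs. asym_limit \<Phi> xb yb u xs \<longrightarrow> xs \<in> Im (dir_limiting_coderiv \<Phi> xb yb u 0))"

end

theory Submission
  imports Defs
begin
lemma norm_le1_cbox:
  fixes x :: "'a::euclidean_space"
  assumes "norm x \<le> 1" shows "x \<in> cbox (-One) One"
  unfolding mem_box
proof (intro ballI conjI)
  fix i :: 'a assume i: "i \<in> Basis"
  have "\<bar>x \<bullet> i\<bar> \<le> 1" using Basis_le_norm[OF i, of x] assms by linarith
  then show "-One \<bullet> i \<le> x \<bullet> i" "x \<bullet> i \<le> One \<bullet> i" using i by (auto simp: inner_minus_left)
qed

lemma pcone_of_polyhedron:
  fixes C :: "'a::euclidean_space set"
  assumes "polyhedron C" "conic C" "C \<noteq> {}"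
  shows "\<exists>S. finite S \<and> C = convex_cone hull S"
proof -
  let ?P = "C \<inter> cbox (-One) One"
  have "polytope ?P"
    using assms(1) by (simp add: polytope_eq_bounded_polyhedron bounded_Int)
  then obtain S where S: "finite S" "?P = convex hull S"
    unfolding polytope_def by blast
  have cc: "convex_cone C"
    using assms polyhedron_imp_convex unfolding convex_cone_def by blast
  have "convex_cone hull S \<subseteq> C"
    by (rule hull_minimal) (use S hull_subset[of S convex] cc in auto)
  moreover have "C \<subseteq> convex_cone hull S"
  proof
    fix c assume c: "c \<in> C"
    show "c \<in> convex_cone hull S"
    proof (cases "c = 0")
      case True then show ?thesis by (simp add: convex_cone_hull_contains_0)
    next
      case False
      let ?d = "(1 / norm c) *\<^sub>R c"
      have "?d \<in> C" using c assms(2) by (simp add: conicD)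
      moreover have "norm ?d \<le> 1" using False by simp
      ultimately have "?d \<in> convex hull S" using S norm_le1_cbox by blast
      then have "?d \<in> convex_cone hull S"
        using convex_hull_subset_convex_cone_hull by blast
      then have "norm c *\<^sub>R ?d \<in> convex_cone hull S"
        using convex_cone_hull_mul norm_ge_zero by blast
      moreover have "norm c *\<^sub>R ?d = c" using False by simp
      ultimately show ?thesis by simp
    qed
  qed
  ultimately show ?thesis using S by blast
qed

lemma closed_linear_image_pcone:
  fixes f :: "'a::euclidean_space \<Rightarrow> 'b::euclidean_space"
  assumes "finite S" "linear f"
  shows "closed (f ` (convex_cone hull S))"
  by (metis assms closed_convex_cone_hull convex_cone_hull_linear_image finite_imageI)

lemma closed_linear_image_polycone:
  fixes f :: "'a::euclidean_space \<Rightarrow> 'b::euclidean_space"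
  assumes "polyhedron C" "conic C" "C \<noteq> {}" "linear f"
  shows "closed (f ` C)"
  using pcone_of_polyhedron[OF assms(1-3)] closed_linear_image_pcone assms(4) by blast

lemma pcone_representation:
  fixes S :: "'a::euclidean_space set"
  assumes "finite S" "x \<in> convex_cone hull S"
  shows "\<exists>a. (\<forall>s\<in>S. 0 \<le> a s) \<and> x = (\<Sum>s\<in>S. a s *\<^sub>R s)"
proof -
  from assms(2) consider "x = 0" | y c where "y \<in> convex hull S" "c \<ge> 0" "x = c *\<^sub>R y"
    unfolding convex_cone_hull_convex_hull by auto
  then show ?thesis
  proof cases
    case 1 then show ?thesis by (intro exI[of _ "\<lambda>_. 0"]) auto
  next
    case 2
    then obtain u where u: "\<forall>s\<in>S. 0 \<le> u s" "y = (\<Sum>s\<in>S. u s *\<^sub>R s)"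
      using convex_hull_finite[OF assms(1)] by auto
    show ?thesis
      by (intro exI[of _ "\<lambda>s. c * u s"]) (use 2 u in \<open>auto simp: scaleR_sum_right\<close>)
  qed
qed

lemma poly_local:
  fixes P :: "'a::euclidean_space set"
  assumes "polyhedron P" "p \<in> P"
  shows "\<exists>\<epsilon>>0. \<exists>C. polyhedron C \<and> conic C \<and> 0 \<in> C \<and> (\<forall>w. norm w < \<epsilon> \<longrightarrow> (p + w \<in> P \<longleftrightarrow> w \<in> C))"
proof -
  obtain F where F: "finite F" "P = \<Inter>F" "\<forall>h\<in>F. \<exists>a b. a \<noteq> 0 \<and> h = {x. a \<bullet> x \<le> b}"
    using assms(1) unfolding polyhedron_def by blast
  have "\<forall>h\<in>F. \<exists>a b. a \<noteq> 0 \<and> (\<forall>x. x \<in> h \<longleftrightarrow> a \<bullet> x \<le> b)"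
    using F(3) by (simp add: set_eq_iff)
  then obtain a where "\<forall>h\<in>F. \<exists>b. a h \<noteq> 0 \<and> (\<forall>x. x \<in> h \<longleftrightarrow> a h \<bullet> x \<le> b)"
    using bchoice[of F "\<lambda>h a. \<exists>b. a \<noteq> 0 \<and> (\<forall>x. x \<in> h \<longleftrightarrow> a \<bullet> x \<le> b)"] by blast
  then obtain b where ab: "\<forall>h\<in>F. a h \<noteq> 0 \<and> (\<forall>x. x \<in> h \<longleftrightarrow> a h \<bullet> x \<le> b h)"
    using bchoice[of F "\<lambda>h b. a h \<noteq> 0 \<and> (\<forall>x. x \<in> h \<longleftrightarrow> a h \<bullet> x \<le> b)"] by blast
  define Fa where "Fa = {h\<in>F. a h \<bullet> p = b h}"
  define C where "C = \<Inter>((\<lambda>h. {w. a h \<bullet> w \<le> 0}) ` Fa)"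
  define \<epsilon> where "\<epsilon> = Min (insert 1 ((\<lambda>h. (b h - a h \<bullet> p) / norm (a h)) ` (F - Fa)))"
  have pin: "a h \<bullet> p \<le> b h" if "h \<in> F" for h
  proof -
    have "p \<in> h" using assms(2) F(2) that by auto
    then show ?thesis using ab that by auto
  qed
  have e1: "\<epsilon> > 0"
    unfolding \<epsilon>_def
  proof (subst Min_gr_iff)
    show "finite (insert 1 ((\<lambda>h. (b h - a h \<bullet> p) / norm (a h)) ` (F - Fa)))" using F(1) by simp
    show "\<forall>x\<in>insert 1 ((\<lambda>h. (b h - a h \<bullet> p) / norm (a h)) ` (F - Fa)). 0 < x"
    proof
      fix x assume "x \<in> insert 1 ((\<lambda>h. (b h - a h \<bullet> p) / norm (a h)) ` (F - Fa))"
      then consider "x = 1" | h where "h \<in> F" "h \<notin> Fa" "x = (b h - a h \<bullet> p) / norm (a h)" by blast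
      then show "0 < x"
      proof cases
        case 2
        then have "a h \<bullet> p < b h" using pin[of h] by (auto simp: Fa_def)
        moreover have "norm (a h) > 0" using ab 2 by auto
        ultimately show ?thesis using 2 by simp
      qed simp
    qed
  qed simp
  have e2: "polyhedron C"
    unfolding C_def using F(1) by (intro polyhedron_Inter) (auto simp: Fa_def polyhedron_halfspace_le)
  have e3: "conic C"
    unfolding C_def conic_def by (auto simp: mult_nonneg_nonpos)
  have e4: "0 \<in> C" unfolding C_def by auto
  have e5: "p + w \<in> P \<longleftrightarrow> w \<in> C" if w: "norm w < \<epsilon>" for w
  proof -
    have inact: "a h \<bullet> (p + w) \<le> b h" if h: "h \<in> F - Fa" for h
    proof -
      have "\<epsilon> \<le> (b h - a h \<bullet> p) / norm (a h)"
        unfolding \<epsilon>_def using F(1) h by (intro Min_le) auto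
      then have "\<epsilon> * norm (a h) \<le> b h - a h \<bullet> p"
        using w h ab by (simp add: le_divide_eq)
      moreover have "norm w * norm (a h) \<le> \<epsilon> * norm (a h)"
        using w by (simp add: mult_right_mono)
      moreover have "a h \<bullet> w \<le> norm (a h) * norm w"
        by (rule norm_cauchy_schwarz)
      ultimately show ?thesis by (simp add: inner_add_right mult.commute)
    qed
    have "p + w \<in> P \<longleftrightarrow> (\<forall>h\<in>F. a h \<bullet> (p + w) \<le> b h)"
      using F(2) ab by auto
    also have "\<dots> \<longleftrightarrow> (\<forall>h\<in>Fa. a h \<bullet> w \<le> 0)"
    proof
      assume "\<forall>h\<in>F. a h \<bullet> (p + w) \<le> b h"
      then show "\<forall>h\<in>Fa. a h \<bullet> w \<le> 0" by (auto simp: Fa_def inner_add_right)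
    next
      assume A: "\<forall>h\<in>Fa. a h \<bullet> w \<le> 0"
      show "\<forall>h\<in>F. a h \<bullet> (p + w) \<le> b h"
      proof
        fix h assume h: "h \<in> F"
        show "a h \<bullet> (p + w) \<le> b h"
        proof (cases "h \<in> Fa")
          case True then show ?thesis using A by (auto simp: Fa_def inner_add_right)
        next
          case False then show ?thesis using inact h by blast
        qed
      qed
    qed
    also have "\<dots> \<longleftrightarrow> w \<in> C" by (auto simp: C_def)
    finally show ?thesis .
  qed
  show ?thesis
    apply (rule exI[of _ \<epsilon>], rule conjI, fact, rule exI[of _ C])
    using e2 e3 e4 e5 by (intro conjI allI impI) simp_all
qed

lemma local_rep:
  fixes D :: "'a::euclidean_space set"
  assumes "locally_polyhedral D p"
  shows "\<exists>\<epsilon>>0. \<exists>\<S>. finite \<S> \<and> (\<forall>S\<in>\<S>. finite S) \<and>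
            (\<forall>w. norm w < \<epsilon> \<longrightarrow> (p + w \<in> D \<longleftrightarrow> (\<exists>S\<in>\<S>. w \<in> convex_cone hull S)))"
proof -
  obtain V F where VF: "p \<in> interior V" "finite F" "\<forall>P\<in>F. polyhedron P" "D \<inter> V = \<Union>F"
    using assms unfolding locally_polyhedral_def by blast
  obtain e0 where e0: "e0 > 0" "ball p e0 \<subseteq> V"
    using VF(1) mem_interior by blast
  have "\<forall>P\<in>F. \<exists>e S. e > 0 \<and> finite S \<and>
          (p \<in> P \<longrightarrow> (\<forall>w. norm w < e \<longrightarrow> (p + w \<in> P \<longleftrightarrow> w \<in> convex_cone hull S))) \<and>
          (p \<notin> P \<longrightarrow> (\<forall>w. norm w < e \<longrightarrow> p + w \<notin> P))"
  proof
    fix P assume P: "P \<in> F"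
    show "\<exists>e S. e > 0 \<and> finite S \<and>
          (p \<in> P \<longrightarrow> (\<forall>w. norm w < e \<longrightarrow> (p + w \<in> P \<longleftrightarrow> w \<in> convex_cone hull S))) \<and>
          (p \<notin> P \<longrightarrow> (\<forall>w. norm w < e \<longrightarrow> p + w \<notin> P))"
    proof (cases "p \<in> P")
      case True
      have "polyhedron P" using VF(3) P by blast
      from poly_local[OF this True] obtain e C where eC: "e > 0" "polyhedron C" "conic C" "0 \<in> C"
          "\<forall>w. norm w < e \<longrightarrow> (p + w \<in> P \<longleftrightarrow> w \<in> C)"
        by (elim exE conjE) blast
      obtain S where S: "finite S" "C = convex_cone hull S"
        using pcone_of_polyhedron[OF eC(2,3)] eC(4) by blast
      show ?thesis
        apply (rule exI[of _ e], rule exI[of _ S])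
        using eC S True by simp
    next
      case False
      have "closed P" using VF(3) P polyhedron_imp_closed by blast
      then have "open (- P)" by auto
      then obtain e where "e > 0" "ball p e \<subseteq> - P"
        using False open_contains_ball by blast
      then have "\<forall>w. norm w < e \<longrightarrow> p + w \<notin> P"
        by (auto simp: subset_iff dist_norm)
      then show ?thesis using \<open>e > 0\<close> False by (intro exI[of _ e] exI[of _ "{}"]) auto
    qed
  qed
  then have "\<exists>E. \<forall>P\<in>F. \<exists>S. E P > 0 \<and> finite S \<and>
          (p \<in> P \<longrightarrow> (\<forall>w. norm w < E P \<longrightarrow> (p + w \<in> P \<longleftrightarrow> w \<in> convex_cone hull S))) \<and>
          (p \<notin> P \<longrightarrow> (\<forall>w. norm w < E P \<longrightarrow> p + w \<notin> P))"
    by (rule bchoice)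
  then obtain E where "\<forall>P\<in>F. \<exists>S. E P > 0 \<and> finite S \<and>
          (p \<in> P \<longrightarrow> (\<forall>w. norm w < E P \<longrightarrow> (p + w \<in> P \<longleftrightarrow> w \<in> convex_cone hull S))) \<and>
          (p \<notin> P \<longrightarrow> (\<forall>w. norm w < E P \<longrightarrow> p + w \<notin> P))" by blast
  then have "\<exists>Sf. \<forall>P\<in>F. E P > 0 \<and> finite (Sf P) \<and>
          (p \<in> P \<longrightarrow> (\<forall>w. norm w < E P \<longrightarrow> (p + w \<in> P \<longleftrightarrow> w \<in> convex_cone hull (Sf P)))) \<and>
          (p \<notin> P \<longrightarrow> (\<forall>w. norm w < E P \<longrightarrow> p + w \<notin> P))"
    by (rule bchoice)
  then obtain Sf where ES: "\<forall>P\<in>F. E P > 0 \<and> finite (Sf P) \<and>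
          (p \<in> P \<longrightarrow> (\<forall>w. norm w < E P \<longrightarrow> (p + w \<in> P \<longleftrightarrow> w \<in> convex_cone hull (Sf P)))) \<and>
          (p \<notin> P \<longrightarrow> (\<forall>w. norm w < E P \<longrightarrow> p + w \<notin> P))"
    by blast
  define \<epsilon> where "\<epsilon> = Min (insert e0 (E ` F))"
  have Epos: "\<forall>P\<in>F. E P > 0" using ES by blast
  have r1: "\<epsilon> > 0" unfolding \<epsilon>_def using VF(2) Epos e0 by (subst Min_gr_iff) auto
  moreover have "finite (Sf ` {P\<in>F. p \<in> P})" using VF(2) by auto
  moreover have "\<forall>S\<in>Sf ` {P\<in>F. p \<in> P}. finite S" using ES by auto
  moreover have "p + w \<in> D \<longleftrightarrow> (\<exists>S\<in>Sf ` {P\<in>F. p \<in> P}. w \<in> convex_cone hull S)"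
    if w: "norm w < \<epsilon>" for w
  proof -
    have "\<epsilon> \<le> e0" unfolding \<epsilon>_def using VF(2) by (intro Min_le) auto
    then have we0: "norm w < e0" using w by linarith
    have wE: "norm w < E P" if "P \<in> F" for P
    proof -
      have "\<epsilon> \<le> E P" unfolding \<epsilon>_def using VF(2) that by (intro Min_le) auto
      then show ?thesis using w by linarith
    qed
    have "p + w \<in> V" using e0 we0 by (auto simp: dist_norm subset_iff)
    then have "p + w \<in> D \<longleftrightarrow> (\<exists>P\<in>F. p + w \<in> P)" using VF(4) by blast
    also have "\<dots> \<longleftrightarrow> (\<exists>P\<in>F. p \<in> P \<and> w \<in> convex_cone hull (Sf P))"
    proof
      assume "\<exists>P\<in>F. p + w \<in> P"
      then obtain P where P: "P \<in> F" "p + w \<in> P" by blast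
      have "p \<in> P"
      proof (rule ccontr)
        assume "p \<notin> P"
        then show False using ES P wE[OF P(1)] by blast
      qed
      then show "\<exists>P\<in>F. p \<in> P \<and> w \<in> convex_cone hull (Sf P)"
        using ES P wE[OF P(1)] by blast
    next
      assume "\<exists>P\<in>F. p \<in> P \<and> w \<in> convex_cone hull (Sf P)"
      then obtain P where P: "P \<in> F" "p \<in> P" "w \<in> convex_cone hull (Sf P)" by blast
      then show "\<exists>P\<in>F. p + w \<in> P" using ES wE[OF P(1)] by blast
    qed
    finally show ?thesis by blast
  qed
  ultimately show ?thesis
    apply - apply (rule exI[of _ \<epsilon>], rule conjI, assumption, rule exI[of _ "Sf ` {P\<in>F. p \<in> P}"])
    by (intro conjI allI impI) simp_all
qed

lemma tangent_eq:
  fixes D T :: "'a::euclidean_space set"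
  assumes loc: "\<forall>w. norm w < \<epsilon> \<longrightarrow> (p + w \<in> D \<longleftrightarrow> w \<in> T)" and "\<epsilon> > 0"
    and cl: "closed T" and co: "conic T" and pD: "p \<in> D"
  shows "tangent_cone D p = T"
proof
  show "tangent_cone D p \<subseteq> T"
  proof
    fix d assume "d \<in> tangent_cone D p"
    then obtain t dk where t: "\<forall>k. t k > 0" "t \<longlonglongrightarrow> 0" "dk \<longlonglongrightarrow> d" "\<forall>k. p + t k *\<^sub>R dk k \<in> D"
      unfolding tangent_cone_def by blast
    have "(\<lambda>k. t k *\<^sub>R dk k) \<longlonglongrightarrow> 0 *\<^sub>R d"
      by (intro tendsto_scaleR t)
    then have "(\<lambda>k. norm (t k *\<^sub>R dk k)) \<longlonglongrightarrow> 0" using tendsto_norm_zero by force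
    then have "eventually (\<lambda>k. norm (t k *\<^sub>R dk k) < \<epsilon>) sequentially"
      using \<open>\<epsilon> > 0\<close> order_tendstoD(2) by blast
    then have "eventually (\<lambda>k. dk k \<in> T) sequentially"
    proof (rule eventually_mono)
      fix k assume "norm (t k *\<^sub>R dk k) < \<epsilon>"
      then have "t k *\<^sub>R dk k \<in> T" using loc t(4) by blast
      then have "(1 / t k) *\<^sub>R (t k *\<^sub>R dk k) \<in> T" using co conicD t(1)
        by (metis less_eq_real_def zero_le_divide_1_iff)
      moreover have "(1 / t k) *\<^sub>R (t k *\<^sub>R dk k) = dk k" using t(1) by (simp add: less_imp_neq[symmetric])
      ultimately show "dk k \<in> T" by simp
    qed
    then show "d \<in> T" using Lim_in_closed_set[OF cl _ _ t(3)] by simp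
  qed
next
  show "T \<subseteq> tangent_cone D p"
  proof
    fix d assume d: "d \<in> T"
    define c where "c = \<epsilon> / (norm d + 1)"
    have c: "c > 0" using \<open>\<epsilon> > 0\<close> by (simp add: c_def add_nonneg_pos)
    have cd: "c * norm d < \<epsilon>"
    proof -
      have "c * norm d = \<epsilon> * (norm d / (norm d + 1))" by (simp add: c_def)
      also have "\<dots> < \<epsilon> * 1"
      proof (intro mult_strict_left_mono)
        have "norm d + 1 > 0" by (simp add: add_nonneg_pos)
        then show "norm d / (norm d + 1) < 1" by (simp add: divide_less_eq)
      qed (use \<open>\<epsilon> > 0\<close> in auto)
      finally show ?thesis by simp
    qed
    define t where "t k = c * inverse (real (Suc k))" for k
    have tpos: "\<forall>k. t k > 0" using c by (simp add: t_def)
    have t0: "t \<longlonglongrightarrow> 0" unfolding t_def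
      using tendsto_mult_right_zero[OF LIMSEQ_inverse_real_of_nat] by simp
    have "p + t k *\<^sub>R d \<in> D" for k
    proof -
      have "t k \<le> c" using c by (simp add: t_def field_simps)
      then have "t k * norm d \<le> c * norm d" by (simp add: mult_right_mono)
      then have "norm (t k *\<^sub>R d) < \<epsilon>"
        using cd tpos by (simp add: less_imp_le)
      moreover have "t k *\<^sub>R d \<in> T" using co d tpos conicD less_imp_le by blast
      ultimately show ?thesis using loc by blast
    qed
    then have all: "\<forall>k. p + t k *\<^sub>R d \<in> D" by blast
    show "d \<in> tangent_cone D p"
      unfolding tangent_cone_def mem_Collect_eq
      apply (rule conjI[OF pD])
      apply (rule exI[of _ t], rule exI[of _ "\<lambda>_. d"])
      using tpos t0 all by simp
  qed
qed


lemma RN_shift: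
  fixes D T :: "'a::euclidean_space set"
  assumes loc: "\<forall>w. norm w < \<epsilon> \<longrightarrow> (p + w \<in> D \<longleftrightarrow> w \<in> T)"
    and w0: "norm w0 < \<epsilon> / 2" "w0 \<in> T"
  shows "regular_normal_cone D (p + w0) = regular_normal_cone T w0"
proof -
  have e: "\<epsilon> > 0" using w0 norm_ge_zero by (metis half_gt_zero_iff le_less_trans)
  have "norm w0 < \<epsilon>" using w0 norm_ge_zero[of w0] by linarith
  then have inD: "p + w0 \<in> D" using loc w0 by blast
  show ?thesis
  proof
    show "regular_normal_cone D (p + w0) \<subseteq> regular_normal_cone T w0"
    proof
      fix v assume v: "v \<in> regular_normal_cone D (p + w0)"
      have "\<exists>\<delta>>0. \<forall>z'\<in>T. norm (z' - w0) < \<delta> \<longrightarrow> inner v (z' - w0) \<le> e * norm (z' - w0)"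
        if "e > 0" for e
      proof -
        obtain \<delta> where \<delta>: "\<delta> > 0" "\<forall>z'\<in>D. norm (z' - (p + w0)) < \<delta> \<longrightarrow> inner v (z' - (p + w0)) \<le> e * norm (z' - (p + w0))"
          using v \<open>e > 0\<close> unfolding regular_normal_cone_def by blast
        show ?thesis
        proof (intro exI[of _ "min \<delta> (\<epsilon>/2)"] conjI ballI impI)
          show "0 < min \<delta> (\<epsilon> / 2)" using \<delta> e by simp
          fix z' assume z': "z' \<in> T" "norm (z' - w0) < min \<delta> (\<epsilon> / 2)"
          have "norm z' \<le> norm (z' - w0) + norm w0" by (metis diff_add_cancel norm_triangle_ineq)
          then have "norm z' < \<epsilon>" using z' w0 by linarith
          then have "p + z' \<in> D" using loc z' by blast
          moreover have "p + z' - (p + w0) = z' - w0" by simp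
          ultimately show "inner v (z' - w0) \<le> e * norm (z' - w0)" using \<delta> z' by fastforce
        qed
      qed
      then show "v \<in> regular_normal_cone T w0" unfolding regular_normal_cone_def using w0 by blast
    qed
  next
    show "regular_normal_cone T w0 \<subseteq> regular_normal_cone D (p + w0)"
    proof
      fix v assume v: "v \<in> regular_normal_cone T w0"
      have "\<exists>\<delta>>0. \<forall>z'\<in>D. norm (z' - (p + w0)) < \<delta> \<longrightarrow> inner v (z' - (p + w0)) \<le> e * norm (z' - (p + w0))"
        if "e > 0" for e
      proof -
        obtain \<delta> where \<delta>: "\<delta> > 0" "\<forall>z'\<in>T. norm (z' - w0) < \<delta> \<longrightarrow> inner v (z' - w0) \<le> e * norm (z' - w0)"
          using v \<open>e > 0\<close> unfolding regular_normal_cone_def by blast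
        show ?thesis
        proof (intro exI[of _ "min \<delta> (\<epsilon>/2)"] conjI ballI impI)
          show "0 < min \<delta> (\<epsilon> / 2)" using \<delta> e by simp
          fix z' assume z': "z' \<in> D" "norm (z' - (p + w0)) < min \<delta> (\<epsilon> / 2)"
          have eq: "z' - (p + w0) = (z' - p) - w0" by simp
          have "norm (z' - p) \<le> norm ((z' - p) - w0) + norm w0" by (metis diff_add_cancel norm_triangle_ineq)
          moreover have "norm (z' - p - w0) < \<epsilon> / 2" using z'(2) eq by simp
          ultimately have "norm (z' - p) < \<epsilon>" using w0 by linarith
          moreover have "p + (z' - p) \<in> D" using z' by simp
          ultimately have "z' - p \<in> T" using loc by blast
          moreover have "norm (z' - p - w0) < \<delta>" using z'(2) eq by simp
          ultimately have "inner v (z' - p - w0) \<le> e * norm (z' - p - w0)" using \<delta>(2) by blast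
          then show "inner v (z' - (p + w0)) \<le> e * norm (z' - (p + w0))" unfolding eq .
        qed
      qed
      then show "v \<in> regular_normal_cone D (p + w0)" unfolding regular_normal_cone_def using inD by blast
    qed
  qed
qed


lemma RN_scale1:
  fixes T :: "'a::real_inner set"
  assumes co: "conic T" and r: "r > 0" and v: "v \<in> regular_normal_cone T w"
  shows "v \<in> regular_normal_cone T (r *\<^sub>R w)"
proof -
  have wT: "w \<in> T" using v unfolding regular_normal_cone_def by blast
  have "\<exists>\<delta>>0. \<forall>z'\<in>T. norm (z' - r *\<^sub>R w) < \<delta> \<longrightarrow> inner v (z' - r *\<^sub>R w) \<le> e * norm (z' - r *\<^sub>R w)"
    if "e > 0" for e
  proof -
    obtain \<delta> where \<delta>: "\<delta> > 0" "\<forall>z'\<in>T. norm (z' - w) < \<delta> \<longrightarrow> inner v (z' - w) \<le> e * norm (z' - w)"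
      using v \<open>e > 0\<close> unfolding regular_normal_cone_def by blast
    show ?thesis
    proof (intro exI[of _ "r * \<delta>"] conjI ballI impI)
      show "0 < r * \<delta>" using r \<delta> by simp
      fix z' assume z': "z' \<in> T" "norm (z' - r *\<^sub>R w) < r * \<delta>"
      have eq: "z' - r *\<^sub>R w = r *\<^sub>R ((1/r) *\<^sub>R z' - w)" using r by (simp add: algebra_simps)
      have zT: "(1/r) *\<^sub>R z' \<in> T" using co z' r conicD by (metis less_eq_real_def zero_le_divide_1_iff)
      have "norm ((1/r) *\<^sub>R z' - w) < \<delta>" using z'(2) r unfolding eq by simp
      then have "inner v ((1/r) *\<^sub>R z' - w) \<le> e * norm ((1/r) *\<^sub>R z' - w)" using \<delta> zT by blast
      then have "r * inner v ((1/r) *\<^sub>R z' - w) \<le> r * (e * norm ((1/r) *\<^sub>R z' - w))"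
        using r by simp
      moreover have "r * norm ((1/r) *\<^sub>R z' - w) = norm (z' - r *\<^sub>R w)"
        unfolding eq using r by simp
      moreover have "r * inner v ((1/r) *\<^sub>R z' - w) = inner v (z' - r *\<^sub>R w)"
        unfolding eq by simp
      ultimately show "inner v (z' - r *\<^sub>R w) \<le> e * norm (z' - r *\<^sub>R w)"
        by (simp add: algebra_simps)
    qed
  qed
  moreover have "r *\<^sub>R w \<in> T" using co wT r conicD less_imp_le by blast
  ultimately show ?thesis unfolding regular_normal_cone_def by blast
qed

lemma RN_scale:
  fixes T :: "'a::real_inner set"
  assumes co: "conic T" and r: "r > 0"
  shows "regular_normal_cone T (r *\<^sub>R w) = regular_normal_cone T w"
proof
  show "regular_normal_cone T w \<subseteq> regular_normal_cone T (r *\<^sub>R w)"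
    using RN_scale1[OF co r] by blast
  show "regular_normal_cone T (r *\<^sub>R w) \<subseteq> regular_normal_cone T w"
    using RN_scale1[OF co, of "1/r" _ "r *\<^sub>R w"] r by auto
qed

definition NC :: "'a::real_inner set \<Rightarrow> 'a \<Rightarrow> 'a set" where
  "NC C w = {\<mu>. \<forall>x\<in>C. inner \<mu> (x - w) \<le> 0}"

definition Pset :: "'a::real_inner set \<Rightarrow> 'a set \<Rightarrow> 'a set" where
  "Pset S J = {\<mu>. (\<forall>s\<in>S. inner \<mu> s \<le> 0) \<and> (\<forall>s\<in>J. inner \<mu> s = 0)}"

lemma le_all_pos_imp_nonpos:
  fixes a c :: real
  assumes "\<And>e. e > 0 \<Longrightarrow> a \<le> e * c" "c \<ge> 0"
  shows "a \<le> 0"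
proof (rule ccontr)
  assume "\<not> a \<le> 0"
  then have a: "a > 0" by simp
  define e where "e = a / (2 * (c + 1))"
  have "e > 0" using a assms(2) by (simp add: e_def)
  then have "a \<le> e * c" using assms(1) by blast
  also have "e * c < e * (c + 1)" using \<open>e > 0\<close> by simp
  also have "e * (c + 1) = a / 2" using assms(2) by (simp add: e_def field_simps)
  finally show False using a by simp
qed

lemma RN_union:
  fixes \<S> :: "'a::euclidean_space set set"
  assumes fin: "finite \<S>" "\<forall>S\<in>\<S>. finite S"
    and w: "w \<in> (\<Union>S\<in>\<S>. convex_cone hull S)"
  shows "regular_normal_cone (\<Union>S\<in>\<S>. convex_cone hull S) w
       = \<Inter> ((\<lambda>S. NC (convex_cone hull S) w) ` {S\<in>\<S>. w \<in> convex_cone hull S})"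
    (is "regular_normal_cone ?T w = ?R")
proof
  show "regular_normal_cone ?T w \<subseteq> ?R"
  proof
    fix \<mu> assume mu: "\<mu> \<in> regular_normal_cone ?T w"
    show "\<mu> \<in> ?R"
    proof (clarsimp simp: NC_def)
      fix S x assume S: "S \<in> \<S>" "w \<in> convex_cone hull S" and x: "x \<in> convex_cone hull S"
      show "inner \<mu> (x - w) \<le> 0"
      proof (cases "x = w")
        case True then show ?thesis by simp
      next
        case False
        then have nx: "norm (x - w) > 0" by simp
        show ?thesis
        proof (rule le_all_pos_imp_nonpos[of _ "norm (x - w)"])
          fix e :: real assume e: "e > 0"
          obtain \<delta> where \<delta>: "\<delta> > 0" "\<forall>z'\<in>?T. norm (z' - w) < \<delta> \<longrightarrow> inner \<mu> (z' - w) \<le> e * norm (z' - w)"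
            using mu e unfolding regular_normal_cone_def by blast
          define s where "s = min 1 (\<delta> / (2 * norm (x - w)))"
          have s: "s > 0" "s \<le> 1" using \<delta> nx by (auto simp: s_def)
          have "s * norm (x - w) \<le> \<delta> / 2"
            using nx by (simp add: s_def min_def field_simps)
          then have sn: "norm (s *\<^sub>R (x - w)) < \<delta>" using s \<delta> by simp
          have "w + s *\<^sub>R (x - w) = (1 - s) *\<^sub>R w + s *\<^sub>R x" by (simp add: algebra_simps)
          moreover have "(1 - s) *\<^sub>R w + s *\<^sub>R x \<in> convex_cone hull S"
            using convexD_alt[OF convex_convex_cone_hull S(2) x] s by simp
          ultimately have "w + s *\<^sub>R (x - w) \<in> ?T" using S(1) by auto
          moreover have "w + s *\<^sub>R (x - w) - w = s *\<^sub>R (x - w)" by simp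
          ultimately have "inner \<mu> (s *\<^sub>R (x - w)) \<le> e * norm (s *\<^sub>R (x - w))"
            using \<delta>(2) sn by metis
          moreover have "norm (s *\<^sub>R (x - w)) = s * norm (x - w)" using s by simp
          moreover have "inner \<mu> (s *\<^sub>R (x - w)) = s * inner \<mu> (x - w)" by simp
          ultimately have "s * inner \<mu> (x - w) \<le> s * (e * norm (x - w))" by (simp add: algebra_simps)
          then show "inner \<mu> (x - w) \<le> e * norm (x - w)" using s by simp
        qed simp
      qed
    qed
  qed
next
  show "?R \<subseteq> regular_normal_cone ?T w"
  proof
    fix \<mu> assume mu: "\<mu> \<in> ?R"
    define U where "U = (\<Union>S\<in>{S\<in>\<S>. w \<notin> convex_cone hull S}. convex_cone hull S)"
    have "closed U" unfolding U_def using fin by (intro closed_UN) (auto intro: closed_convex_cone_hull)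
    moreover have "w \<notin> U" unfolding U_def by blast
    ultimately have "open (- U)" "w \<in> - U" by auto
    then obtain r where r: "r > 0" "ball w r \<subseteq> - U"
      using open_contains_ball by blast
    have "\<exists>\<delta>>0. \<forall>z'\<in>?T. norm (z' - w) < \<delta> \<longrightarrow> inner \<mu> (z' - w) \<le> e * norm (z' - w)" if e: "e > 0" for e
    proof (intro exI[of _ r] conjI ballI impI)
      show "r > 0" by fact
      fix z' assume z': "z' \<in> ?T" "norm (z' - w) < r"
      then obtain S where S: "S \<in> \<S>" "z' \<in> convex_cone hull S" by blast
      have "z' \<in> ball w r" using z'(2) by (simp add: dist_norm norm_minus_commute)
      then have "z' \<notin> U" using r by blast
      then have "w \<in> convex_cone hull S" using S unfolding U_def by blast
      then have "\<mu> \<in> NC (convex_cone hull S) w" using mu S by blast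
      then have "inner \<mu> (z' - w) \<le> 0" using S unfolding NC_def by blast
      also have "0 \<le> e * norm (z' - w)" using e by simp
      finally show "inner \<mu> (z' - w) \<le> e * norm (z' - w)" .
    qed
    then show "\<mu> \<in> regular_normal_cone ?T w" unfolding regular_normal_cone_def using w by blast
  qed
qed

lemma NC_Pset:
  fixes S :: "'a::euclidean_space set"
  assumes fin: "finite S" and w: "w \<in> convex_cone hull S"
  shows "\<exists>J\<subseteq>S. NC (convex_cone hull S) w = Pset S J"
proof -
  obtain a where a: "\<forall>s\<in>S. 0 \<le> a s" "w = (\<Sum>s\<in>S. a s *\<^sub>R s)"
    using pcone_representation[OF fin w] by blast
  define J where "J = {s\<in>S. a s > 0}"
  have "NC (convex_cone hull S) w = Pset S J"
  proof
    show "NC (convex_cone hull S) w \<subseteq> Pset S J"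
    proof
      fix \<mu> assume mu: "\<mu> \<in> NC (convex_cone hull S) w"
      have ms: "inner \<mu> s \<le> 0" if s: "s \<in> S" for s
      proof -
        have ws: "w + s \<in> convex_cone hull S" by (rule convex_cone_hull_add[OF w hull_inc[OF s]])
        have "\<forall>x\<in>convex_cone hull S. inner \<mu> (x - w) \<le> 0" using mu unfolding NC_def by blast
        then have "inner \<mu> (w + s - w) \<le> 0" using ws by blast
        then show ?thesis by simp
      qed
      have "inner \<mu> (0 - w) \<le> 0" using mu convex_cone_hull_contains_0 unfolding NC_def by blast
      then have mw0: "inner \<mu> w \<ge> 0" by simp
      have mw: "inner \<mu> w = (\<Sum>s\<in>S. a s * inner \<mu> s)" using a(2) by (simp add: inner_sum_right)
      have terms: "\<forall>s\<in>S. - (a s * inner \<mu> s) \<ge> 0" using a(1) ms by (simp add: mult_nonneg_nonpos)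
      have terms': "\<And>s. s \<in> S \<Longrightarrow> 0 \<le> - (a s * inner \<mu> s)" using terms by blast
      have "(\<Sum>s\<in>S. - (a s * inner \<mu> s)) = 0"
      proof -
        have "(\<Sum>s\<in>S. - (a s * inner \<mu> s)) \<ge> 0" by (rule sum_nonneg) (use terms in blast)
        moreover have "(\<Sum>s\<in>S. - (a s * inner \<mu> s)) = - inner \<mu> w" by (simp only: sum_negf mw)
        ultimately show ?thesis using mw0 by linarith
      qed
      then have z: "\<forall>s\<in>S. - (a s * inner \<mu> s) = 0"
        using iffD1[OF sum_nonneg_eq_0_iff[OF fin, of "\<lambda>s. - (a s * inner \<mu> s)", OF terms']] by blast
      have "\<forall>s\<in>J. inner \<mu> s = 0"
      proof
        fix s assume "s \<in> J"
        then have s: "s \<in> S" "a s > 0" unfolding J_def by blast+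
        then have "a s * inner \<mu> s = 0" using z by force
        then show "inner \<mu> s = 0" using s(2) by simp
      qed
      then show "\<mu> \<in> Pset S J" using ms unfolding Pset_def by blast
    qed
  next
    show "Pset S J \<subseteq> NC (convex_cone hull S) w"
    proof
      fix \<mu> assume mu: "\<mu> \<in> Pset S J"
      have "inner \<mu> w = (\<Sum>s\<in>S. a s * inner \<mu> s)" using a(2) by (simp add: inner_sum_right)
      also have "\<dots> = 0"
      proof (intro sum.neutral ballI)
        fix s assume s: "s \<in> S"
        show "a s * inner \<mu> s = 0"
        proof (cases "a s > 0")
          case True
          then have "s \<in> J" using s unfolding J_def by blast
          then have "inner \<mu> s = 0" using mu unfolding Pset_def by blast
          then show ?thesis by simp
        next
          case False then have "a s = 0" using a(1) s by force
          then show ?thesis by simp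
        qed
      qed
      finally have mw: "inner \<mu> w = 0" .
      have "inner \<mu> x \<le> 0" if x: "x \<in> convex_cone hull S" for x
      proof -
        obtain b where b: "\<forall>s\<in>S. 0 \<le> b s" "x = (\<Sum>s\<in>S. b s *\<^sub>R s)"
          using pcone_representation[OF fin x] by blast
        have "inner \<mu> x = (\<Sum>s\<in>S. b s * inner \<mu> s)" using b(2) by (simp add: inner_sum_right)
        also have "\<dots> \<le> 0" using b(1) mu unfolding Pset_def
          by (intro sum_nonpos) (simp add: mult_nonneg_nonpos)
        finally show ?thesis .
      qed
      then show "\<mu> \<in> NC (convex_cone hull S) w" unfolding NC_def using mw by (simp add: inner_diff_right)
    qed
  qed
  moreover have "J \<subseteq> S" unfolding J_def by blast
  ultimately show ?thesis by blast
qed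

lemma polyhedron_Pset:
  fixes S :: "'a::euclidean_space set"
  assumes "finite S" "finite J"
  shows "polyhedron (Pset S J)"
proof -
  have "Pset S J = (\<Inter>s\<in>S. {\<mu>. s \<bullet> \<mu> \<le> 0}) \<inter> (\<Inter>s\<in>J. {\<mu>. s \<bullet> \<mu> = 0})"
    unfolding Pset_def by (auto simp: inner_commute)
  moreover have "polyhedron (\<Inter>s\<in>S. {\<mu>. s \<bullet> \<mu> \<le> 0})"
    using assms(1) by (intro polyhedron_Inter) (auto simp: polyhedron_halfspace_le)
  moreover have "polyhedron (\<Inter>s\<in>J. {\<mu>. s \<bullet> \<mu> = 0})"
    using assms(2) by (intro polyhedron_Inter) (auto simp: polyhedron_hyperplane)
  ultimately show ?thesis by simp
qed

lemma conic_Pset: "conic (Pset S J)"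
  unfolding conic_def Pset_def by (auto simp: mult_nonneg_nonpos)

lemma zero_Pset: "0 \<in> Pset S J"
  unfolding Pset_def by simp

definition Bfam :: "'a::real_inner set set \<Rightarrow> 'a set set" where
  "Bfam \<S> = (\<Union>S\<in>\<S>. Pset S ` Pow S)"

definition Qfam :: "'a::real_inner set set \<Rightarrow> 'a set set" where
  "Qfam \<S> = Inter ` Pow (Bfam \<S>)"

lemma finite_Qfam:
  assumes "finite \<S>" "\<forall>S\<in>\<S>. finite S"
  shows "finite (Qfam \<S>)"
  unfolding Qfam_def Bfam_def using assms by auto

lemma Qfam_props:
  fixes \<S> :: "'a::euclidean_space set set"
  assumes "finite \<S>" "\<forall>S\<in>\<S>. finite S" "Q \<in> Qfam \<S>"
  shows "polyhedron Q \<and> conic Q \<and> 0 \<in> Q"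
proof -
  obtain \<B> where B: "\<B> \<subseteq> Bfam \<S>" "Q = \<Inter>\<B>" using assms(3) unfolding Qfam_def by blast
  have "finite (Bfam \<S>)" unfolding Bfam_def using assms(1,2) by auto
  then have fB: "finite \<B>" using B(1) finite_subset by blast
  have "polyhedron P \<and> conic P \<and> 0 \<in> P" if P: "P \<in> \<B>" for P
  proof -
    obtain S J where "S \<in> \<S>" "J \<subseteq> S" "P = Pset S J" using P B(1) unfolding Bfam_def by blast
    moreover have "finite S" "finite J" using \<open>S \<in> \<S>\<close> \<open>J \<subseteq> S\<close> assms(2) finite_subset by blast+
    ultimately show ?thesis using polyhedron_Pset conic_Pset zero_Pset by metis
  qed
  then show ?thesis using B fB by (auto simp: conic_def)
qed

lemma RN_in_Qfam:
  fixes \<S> :: "'a::euclidean_space set set"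
  assumes fin: "finite \<S>" "\<forall>S\<in>\<S>. finite S"
    and w: "w \<in> (\<Union>S\<in>\<S>. convex_cone hull S)"
  shows "regular_normal_cone (\<Union>S\<in>\<S>. convex_cone hull S) w \<in> Qfam \<S>"
proof -
  have "(\<lambda>S. NC (convex_cone hull S) w) ` {S\<in>\<S>. w \<in> convex_cone hull S} \<subseteq> Bfam \<S>"
  proof
    fix P assume "P \<in> (\<lambda>S. NC (convex_cone hull S) w) ` {S\<in>\<S>. w \<in> convex_cone hull S}"
    then obtain S where S: "S \<in> \<S>" "w \<in> convex_cone hull S" "P = NC (convex_cone hull S) w" by blast
    have "finite S" using S(1) fin(2) by blast
    then obtain J where "J \<subseteq> S" "P = Pset S J" using NC_Pset[of S w] S(2,3) by blast
    then show "P \<in> Bfam \<S>" using S(1) unfolding Bfam_def by blast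
  qed
  then show ?thesis unfolding RN_union[OF fin w] Qfam_def by blast
qed

lemma lin_bl: "linear (blinfun_apply G)"
  by (simp add: blinfun.bounded_linear_right bounded_linear.linear)

lemma adj_inner:
  fixes G :: "'a::euclidean_space \<Rightarrow>\<^sub>L 'b::euclidean_space"
  shows "inner x (adjoint (blinfun_apply G) y) = inner (blinfun_apply G x) y"
  by (rule adjoint_works[OF lin_bl])

lemma gph_char:
  fixes g :: "'a \<Rightarrow> 'b::ab_group_add"
  shows "(x, y) \<in> gph (\<lambda>x. (\<lambda>d. g x - d) ` D) \<longleftrightarrow> g x - y \<in> D"
proof
  assume "(x, y) \<in> gph (\<lambda>x. (\<lambda>d. g x - d) ` D)"
  then obtain d where "d \<in> D" "y = g x - d" unfolding gph_def by blast
  then show "g x - y \<in> D" by simp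
next
  assume "g x - y \<in> D"
  moreover have "y = g x - (g x - y)" by simp
  ultimately show "(x, y) \<in> gph (\<lambda>x. (\<lambda>d. g x - d) ` D)" unfolding gph_def by blast
qed

lemma deriv_lip:
  fixes g :: "'a::euclidean_space \<Rightarrow> 'b::euclidean_space"
  assumes "(g has_derivative blinfun_apply G) (at x0)"
  shows "\<exists>\<delta>>0. \<forall>x. norm (x - x0) < \<delta> \<longrightarrow> norm (g x - g x0) \<le> (norm G + 1) * norm (x - x0)"
proof -
  obtain \<delta> where \<delta>: "\<delta> > 0" "\<forall>x. norm (x - x0) < \<delta> \<longrightarrow> norm (g x - g x0 - G (x - x0)) \<le> 1 * norm (x - x0)"
    using assms unfolding has_derivative_at_alt by (meson zero_less_one)
  have "norm (g x - g x0) \<le> (norm G + 1) * norm (x - x0)" if x: "norm (x - x0) < \<delta>" for x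
  proof -
    have "norm (g x - g x0) \<le> norm (g x - g x0 - G (x - x0)) + norm (G (x - x0))"
      by (metis diff_add_cancel norm_triangle_ineq)
    also have "\<dots> \<le> 1 * norm (x - x0) + norm G * norm (x - x0)"
      using \<delta>(2) x norm_blinfun by (metis add_mono)
    finally show ?thesis by (simp add: algebra_simps)
  qed
  then show ?thesis using \<delta>(1) by blast
qed

lemma GR:
  fixes g :: "'a::euclidean_space \<Rightarrow> 'b::euclidean_space"
  assumes gd: "(g has_derivative blinfun_apply G) (at x0)"
    and d0: "g x0 - y0 \<in> D"
    and mu: "\<mu> \<in> regular_normal_cone D (g x0 - y0)"
  shows "(adjoint (blinfun_apply G) \<mu>, - \<mu>) \<in> regular_normal_cone (gph (\<lambda>x. (\<lambda>d. g x - d) ` D)) (x0, y0)"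
proof -
  let ?G = "gph (\<lambda>x. (\<lambda>d. g x - d) ` D)"
  define L where "L = norm G + 1"
  have L: "L \<ge> 1" unfolding L_def by simp
  obtain \<delta>3 where \<delta>3: "\<delta>3 > 0" "\<forall>x. norm (x - x0) < \<delta>3 \<longrightarrow> norm (g x - g x0) \<le> L * norm (x - x0)"
    using deriv_lip[OF gd] unfolding L_def by blast
  have "\<exists>\<delta>>0. \<forall>z'\<in>?G. norm (z' - (x0, y0)) < \<delta> \<longrightarrow>
           inner (adjoint (blinfun_apply G) \<mu>, - \<mu>) (z' - (x0, y0)) \<le> e * norm (z' - (x0, y0))"
    if e: "e > 0" for e
  proof -
    define e1 where "e1 = e / (2 * (L + 1))"
    define e2 where "e2 = e / (2 * (norm \<mu> + 1))"
    have e1: "e1 > 0" using e L by (simp add: e1_def)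
    have e2: "e2 > 0" using e by (simp add: e2_def add_nonneg_pos)
    obtain \<delta>1 where \<delta>1: "\<delta>1 > 0" "\<forall>z'\<in>D. norm (z' - (g x0 - y0)) < \<delta>1 \<longrightarrow>
        inner \<mu> (z' - (g x0 - y0)) \<le> e1 * norm (z' - (g x0 - y0))"
      using mu e1 unfolding regular_normal_cone_def by blast
    obtain \<delta>2 where \<delta>2: "\<delta>2 > 0" "\<forall>x. norm (x - x0) < \<delta>2 \<longrightarrow> norm (g x - g x0 - G (x - x0)) \<le> e2 * norm (x - x0)"
      using gd e2 unfolding has_derivative_at_alt by blast
    define \<delta> where "\<delta> = min (min \<delta>2 \<delta>3) (\<delta>1 / (L + 1))"
    have \<delta>: "\<delta> > 0" using \<delta>1 \<delta>2 \<delta>3 L by (simp add: \<delta>_def)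
    show ?thesis
    proof (intro exI[of _ \<delta>] conjI ballI impI)
      show "\<delta> > 0" by fact
      fix z' assume z': "z' \<in> ?G" "norm (z' - (x0, y0)) < \<delta>"
      obtain x y where xy: "z' = (x, y)" by fastforce
      define np where "np = norm (z' - (x0, y0))"
      have zz: "z' - (x0, y0) = (x - x0, y - y0)" using xy by simp
      have hx: "norm (x - x0) \<le> np" unfolding np_def zz by (rule norm_fst_le)
      have hy: "norm (y - y0) \<le> np" unfolding np_def zz by (rule norm_snd_le)
      have np: "np < \<delta>" using z' unfolding np_def by simp
      have dD: "g x - y \<in> D" using z' xy gph_char by metis
      have "norm (x - x0) < \<delta>3" using hx np by (simp add: \<delta>_def)
      then have lip: "norm (g x - g x0) \<le> L * np" using \<delta>3 hx L
        by (meson order_trans mult_left_mono less_le_trans zero_le_one)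
      have "norm (x - x0) < \<delta>2" using hx np by (simp add: \<delta>_def)
      then have rem: "norm (g x - g x0 - G (x - x0)) \<le> e2 * np"
        using \<delta>2 hx e2 by (meson order_trans mult_left_mono less_imp_le)
      have dd: "(g x - y) - (g x0 - y0) = (g x - g x0) - (y - y0)" by (simp add: algebra_simps)
      have ndd: "norm ((g x - y) - (g x0 - y0)) \<le> (L + 1) * np"
      proof -
        have "norm ((g x - y) - (g x0 - y0)) \<le> norm (g x - g x0) + norm (y - y0)"
          unfolding dd by (rule norm_triangle_ineq4)
        also have "\<dots> \<le> L * np + np" using lip hy by simp
        finally show ?thesis by (simp add: algebra_simps)
      qed
      have "(L + 1) * np < (L + 1) * (\<delta>1 / (L + 1))"
        using np L by (intro mult_strict_left_mono) (auto simp: \<delta>_def)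
      then have "norm ((g x - y) - (g x0 - y0)) < \<delta>1" using ndd L by simp
      then have i1: "inner \<mu> ((g x - y) - (g x0 - y0)) \<le> e1 * norm ((g x - y) - (g x0 - y0))"
        using \<delta>1(2) dD by blast
      have i1': "e1 * norm ((g x - y) - (g x0 - y0)) \<le> e1 * ((L + 1) * np)"
        using ndd e1 by (simp add: mult_left_mono)
      have "e1 * ((L + 1) * np) = (e / 2) * np" using L by (simp add: e1_def field_simps)
      with i1 i1' have I1: "inner \<mu> ((g x - y) - (g x0 - y0)) \<le> (e / 2) * np" by linarith
      have "inner \<mu> (g x - g x0 - G (x - x0)) \<ge> - (norm \<mu> * (e2 * np))"
      proof -
        have "\<bar>inner \<mu> (g x - g x0 - G (x - x0))\<bar> \<le> norm \<mu> * norm (g x - g x0 - G (x - x0))"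
          by (rule Cauchy_Schwarz_ineq2)
        also have "\<dots> \<le> norm \<mu> * (e2 * np)" using rem by (simp add: mult_left_mono)
        finally show ?thesis by linarith
      qed
      moreover have "norm \<mu> * (e2 * np) \<le> (e / 2) * np"
      proof -
        have q: "norm \<mu> / (norm \<mu> + 1) \<le> 1"
          by (subst divide_le_eq_1) (simp add: add_nonneg_pos)
        have "norm \<mu> * e2 = (e / 2) * (norm \<mu> / (norm \<mu> + 1))"
          by (simp add: e2_def field_simps)
        also have "\<dots> \<le> (e / 2) * 1" using e q by (intro mult_left_mono) auto
        finally have "norm \<mu> * e2 \<le> e / 2" by simp
        moreover have "np \<ge> 0" unfolding np_def by simp
        ultimately show ?thesis by (metis mult.assoc mult_right_mono)
      qed
      ultimately have I2: "- inner \<mu> (g x - g x0 - G (x - x0)) \<le> (e / 2) * np" by linarith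
      have "inner (adjoint (blinfun_apply G) \<mu>, - \<mu>) (z' - (x0, y0))
            = inner (G (x - x0)) \<mu> - inner \<mu> (y - y0)"
        unfolding zz by (simp add: adj_inner inner_commute)
      also have "\<dots> = inner \<mu> ((g x - y) - (g x0 - y0)) - inner \<mu> (g x - g x0 - G (x - x0))"
        unfolding dd by (simp add: inner_diff_right inner_commute)
      also have "\<dots> \<le> e * np" using I1 I2 by linarith
      finally show "inner (adjoint (blinfun_apply G) \<mu>, - \<mu>) (z' - (x0, y0)) \<le> e * norm (z' - (x0, y0))"
        unfolding np_def .
    qed
  qed
  moreover have "(x0, y0) \<in> ?G" using d0 gph_char by metis
  ultimately show ?thesis unfolding regular_normal_cone_def by blast
qed

lemma RG:
  fixes g :: "'a::euclidean_space \<Rightarrow> 'b::euclidean_space"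
  assumes gd: "(g has_derivative blinfun_apply G) (at x0)"
    and nm: "(xs, - l) \<in> regular_normal_cone (gph (\<lambda>x. (\<lambda>d. g x - d) ` D)) (x0, y0)"
  shows "l \<in> regular_normal_cone D (g x0 - y0) \<and> xs = adjoint (blinfun_apply G) l"
proof -
  let ?G = "gph (\<lambda>x. (\<lambda>d. g x - d) ` D)"
  have inG: "(x0, y0) \<in> ?G" using nm unfolding regular_normal_cone_def by blast
  then have d0: "g x0 - y0 \<in> D" using gph_char by metis
  have nm': "\<forall>e>0. \<exists>\<delta>>0. \<forall>z'\<in>?G. norm (z' - (x0, y0)) < \<delta> \<longrightarrow>
        inner (xs, - l) (z' - (x0, y0)) \<le> e * norm (z' - (x0, y0))"
    using nm unfolding regular_normal_cone_def by blast
  have part1: "l \<in> regular_normal_cone D (g x0 - y0)"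
  proof -
    have "\<exists>\<delta>>0. \<forall>z'\<in>D. norm (z' - (g x0 - y0)) < \<delta> \<longrightarrow> inner l (z' - (g x0 - y0)) \<le> e * norm (z' - (g x0 - y0))"
      if e: "e > 0" for e
    proof -
      obtain \<delta> where \<delta>: "\<delta> > 0" "\<forall>z'\<in>?G. norm (z' - (x0, y0)) < \<delta> \<longrightarrow>
          inner (xs, - l) (z' - (x0, y0)) \<le> e * norm (z' - (x0, y0))"
        using nm' e by blast
      show ?thesis
      proof (intro exI[of _ \<delta>] conjI ballI impI)
        show "\<delta> > 0" by fact
        fix d assume d: "d \<in> D" "norm (d - (g x0 - y0)) < \<delta>"
        have "(x0, g x0 - d) \<in> ?G" using d gph_char[of x0 "g x0 - d" g D] by simp
        moreover have eq: "(x0, g x0 - d) - (x0, y0) = (0, - (d - (g x0 - y0)))" by simp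
        moreover have "norm ((x0, g x0 - d) - (x0, y0)) = norm (d - (g x0 - y0))"
          unfolding eq by (simp add: norm_minus_commute)
        ultimately have "inner (xs, - l) ((x0, g x0 - d) - (x0, y0)) \<le> e * norm (d - (g x0 - y0))"
          using \<delta>(2) d(2) by metis
        moreover have "inner (xs, - l) ((x0, g x0 - d) - (x0, y0)) = inner l (d - (g x0 - y0))"
          unfolding eq by (simp add: inner_diff_right)
        ultimately show "inner l (d - (g x0 - y0)) \<le> e * norm (d - (g x0 - y0))"
          by simp
      qed
    qed
    then show ?thesis unfolding regular_normal_cone_def using d0 by blast
  qed
  define v where "v = xs - adjoint (blinfun_apply G) l"
  have key: "inner v h \<le> 0" for h
  proof (cases "h = 0")
    case True then show ?thesis by simp
  next
    case False
    then have nh: "norm h > 0" by simp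
    define c where "c = norm h * (2 + norm G + norm l)"
    have c: "c \<ge> 0" unfolding c_def by simp
    show ?thesis
    proof (rule le_all_pos_imp_nonpos[OF _ c])
      fix e0 :: real assume e0: "e0 > 0"
      define e where "e = min e0 1"
      have e: "e > 0" "e \<le> 1" "e \<le> e0" using e0 by (auto simp: e_def)
      obtain \<delta> where \<delta>: "\<delta> > 0" "\<forall>z'\<in>?G. norm (z' - (x0, y0)) < \<delta> \<longrightarrow>
          inner (xs, - l) (z' - (x0, y0)) \<le> e * norm (z' - (x0, y0))"
        using nm' e by blast
      obtain \<delta>' where \<delta>': "\<delta>' > 0" "\<forall>x. norm (x - x0) < \<delta>' \<longrightarrow> norm (g x - g x0 - G (x - x0)) \<le> e * norm (x - x0)"
        using gd e unfolding has_derivative_at_alt by blast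
      define K where "K = norm G + 2"
      have K: "K > 0" unfolding K_def by (simp add: add_nonneg_pos)
      define s where "s = min (\<delta>' / (2 * norm h)) (\<delta> / (2 * K * norm h))"
      have s: "s > 0" using \<delta> \<delta>' nh K by (simp add: s_def)
      have sh1: "s * norm h < \<delta>'"
      proof -
        have "s \<le> \<delta>' / (2 * norm h)" by (simp add: s_def)
        then have "s * norm h \<le> (\<delta>' / (2 * norm h)) * norm h" using nh by (intro mult_right_mono) auto
        also have "\<dots> = \<delta>' / 2" using nh by simp
        finally show ?thesis using \<delta>' by simp
      qed
      have sh2: "K * (s * norm h) < \<delta>"
      proof -
        have "s \<le> \<delta> / (2 * K * norm h)" by (simp add: s_def)
        then have "s * norm h \<le> (\<delta> / (2 * K * norm h)) * norm h" using nh by (intro mult_right_mono) auto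
        also have "\<dots> = \<delta> / (2 * K)" using nh by simp
        finally have "K * (s * norm h) \<le> K * (\<delta> / (2 * K))" using K by (intro mult_left_mono) auto
        also have "\<dots> = \<delta> / 2" using K by simp
        finally show ?thesis using \<delta> by simp
      qed
      define x where "x = x0 + s *\<^sub>R h"
      define y where "y = y0 + (g x - g x0)"
      have xx: "x - x0 = s *\<^sub>R h" by (simp add: x_def)
      have nxx: "norm (x - x0) = s * norm h" using s by (simp add: xx)
      have "(x, y) \<in> ?G" using d0 gph_char[of x y g D] by (simp add: y_def)
      define r where "r = g x - g x0 - G (x - x0)"
      have nr: "norm r \<le> e * (s * norm h)" using \<delta>'(2) sh1 nxx unfolding r_def by metis
      have ng: "norm (g x - g x0) \<le> (norm G + e) * (s * norm h)"
      proof -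
        have "g x - g x0 = G (x - x0) + r" by (simp add: r_def)
        then have "norm (g x - g x0) \<le> norm (G (x - x0)) + norm r" by (metis norm_triangle_ineq)
        also have "\<dots> \<le> norm G * (s * norm h) + e * (s * norm h)"
          using nr norm_blinfun[of G "x - x0"] nxx by simp
        finally show ?thesis by (simp add: algebra_simps)
      qed
      have zz: "(x, y) - (x0, y0) = (x - x0, g x - g x0)" by (simp add: y_def)
      have npair: "norm ((x, y) - (x0, y0)) \<le> K * (s * norm h)"
      proof -
        have "norm ((x, y) - (x0, y0)) \<le> norm (x - x0) + norm (g x - g x0)"
          unfolding zz by (rule norm_Pair_le)
        also have "\<dots> \<le> s * norm h + (norm G + e) * (s * norm h)" using nxx ng by simp
        also have "\<dots> \<le> K * (s * norm h)" using e s nh by (simp add: K_def algebra_simps)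
        finally show ?thesis .
      qed
      then have "norm ((x, y) - (x0, y0)) < \<delta>" using sh2 by simp
      then have I: "inner (xs, - l) ((x, y) - (x0, y0)) \<le> e * norm ((x, y) - (x0, y0))"
        using \<delta>(2) \<open>(x, y) \<in> ?G\<close> by blast
      have lhs: "inner (xs, - l) ((x, y) - (x0, y0)) = s * inner v h - inner l r"
      proof -
        have "inner (xs, - l) ((x, y) - (x0, y0)) = inner xs (s *\<^sub>R h) - inner l (g x - g x0)"
          unfolding zz xx by simp
        also have "inner l (g x - g x0) = inner l (G (s *\<^sub>R h)) + inner l r"
          by (simp add: r_def xx inner_diff_right)
        also have "inner l (G (s *\<^sub>R h)) = s * inner (adjoint (blinfun_apply G) l) h"
          using adj_inner[of h G l] by (simp add: blinfun.scaleR_right inner_commute)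
        finally show ?thesis by (simp add: v_def inner_diff_left algebra_simps)
      qed
      have "- inner l r \<ge> - (norm l * (e * (s * norm h)))"
      proof -
        have "\<bar>inner l r\<bar> \<le> norm l * norm r" by (rule Cauchy_Schwarz_ineq2)
        also have "\<dots> \<le> norm l * (e * (s * norm h))" using nr by (simp add: mult_left_mono)
        finally show ?thesis by linarith
      qed
      moreover have "e * norm ((x, y) - (x0, y0)) \<le> e * (K * (s * norm h))"
        using npair e by (simp add: mult_left_mono)
      ultimately have "s * inner v h \<le> e * (K * (s * norm h)) + norm l * (e * (s * norm h))"
        using I lhs by linarith
      also have "\<dots> = s * (e * (norm h * (K + norm l)))" by (simp add: algebra_simps)
      finally have "inner v h \<le> e * (norm h * (K + norm l))" using s by simp
      also have "\<dots> = e * c" by (simp add: c_def K_def algebra_simps)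
      also have "\<dots> \<le> e0 * c" using e c by (simp add: mult_right_mono)
      finally show "inner v h \<le> e0 * c" .
    qed
  qed
  have "inner v v \<le> 0" by (rule key)
  then have "v = 0" using inner_ge_zero[of v] inner_eq_zero_iff[of v] by linarith
  then show ?thesis using part1 by (simp add: v_def)
qed

lemma subseq_const:
  fixes f :: "nat \<Rightarrow> 'c"
  assumes "finite (range f)"
  shows "\<exists>(r::nat\<Rightarrow>nat) c. strict_mono r \<and> (\<forall>n. f (r n) = c)"
proof -
  have "\<exists>c\<in>range f. infinite {k. f k = c}"
  proof (rule ccontr)
    assume "\<not> ?thesis"
    then have fc: "\<And>c. c \<in> range f \<Longrightarrow> finite {k. f k = c}" by blast
    have "finite (\<Union>c\<in>range f. {k. f k = c})" by (rule finite_UN_I[OF assms fc])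
    moreover have "(\<Union>c\<in>range f. {k. f k = c}) = UNIV" by auto
    ultimately have "finite (UNIV :: nat set)" by simp
    then show False using infinite_UNIV_nat by blast
  qed
  then obtain c where c: "infinite {k. f k = c}" by blast
  have "\<exists>r::nat\<Rightarrow>nat. strict_mono r \<and> (\<forall>n. r n \<in> {k. f k = c})" by (rule infinite_enumerate[OF c])
  then show ?thesis by auto
qed

lemma TK:
  assumes "convex_cone Q" "Q \<subseteq> K" "y \<in> Q" "z \<in> Q"
  shows "z \<in> tangent_cone K y"
proof -
  define t where "t k = inverse (real (Suc k))" for k
  have "\<forall>k. t k > 0" by (simp add: t_def)
  moreover have "t \<longlonglongrightarrow> 0" unfolding t_def by (rule LIMSEQ_inverse_real_of_nat)
  moreover have "\<forall>k. y + t k *\<^sub>R z \<in> K"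
  proof
    fix k
    have "t k *\<^sub>R z \<in> Q" using assms(1,4) by (simp add: convex_cone_scaleR t_def)
    then have "y + t k *\<^sub>R z \<in> Q" using assms(1,3) convex_cone_add by blast
    then show "y + t k *\<^sub>R z \<in> K" using assms(2) by blast
  qed
  moreover have "y \<in> K" using assms(2,3) by blast
  ultimately show ?thesis unfolding tangent_cone_def mem_Collect_eq
    apply - apply (rule conjI, assumption)
    apply (rule exI[of _ t], rule exI[of _ "\<lambda>_. z"]) by simp
qed

lemma lin_tendsto:
  fixes f :: "'a::euclidean_space \<Rightarrow> 'b::real_normed_vector"
  assumes "linear f" "(X \<longlongrightarrow> x) F"
  shows "((\<lambda>k. f (X k)) \<longlongrightarrow> f x) F"
proof -
  have "bounded_linear f" using assms(1) linear_conv_bounded_linear by blast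
  then show ?thesis using bounded_linear.tendsto assms(2) by blast
qed

lemma LemA:
  fixes At :: "'b::euclidean_space \<Rightarrow> 'a::euclidean_space" and Hm :: "'b \<Rightarrow> 'a"
  assumes lin: "linear At" "linear Hm"
    and Q: "closed Q" "convex_cone Q" "closed (At ` Q)" "Q \<subseteq> K" "\<forall>k. lam k \<in> Q"
    and t: "\<forall>k. t k > 0" "t \<longlonglongrightarrow> 0"
    and xs: "xsk \<longlonglongrightarrow> xs"
    and eq: "\<forall>k. xsk k = At (lam k) + t k *\<^sub>R Hm (lam k) + r k"
    and rb: "\<forall>k. norm (r k) \<le> t k * \<eta> k * norm (lam k)" "\<forall>k. \<eta> k \<ge> 0" "\<eta> \<longlonglongrightarrow> 0"
    and Z: "\<forall>k. t k * norm (lam k) \<le> Z"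
  shows "\<exists>y z. xs = Hm y + At z \<and> y \<in> K \<and> At y = 0 \<and> z \<in> tangent_cone K y"
proof -
  define w where "w k = t k *\<^sub>R lam k" for k
  have wQ: "w k \<in> Q" for k using Q(2,5) t(1) by (simp add: w_def convex_cone_scaleR less_imp_le)
  have "norm (w k) \<le> Z" for k using Z t(1) by (simp add: w_def less_imp_le)
  then have "bounded (range w)" by (intro boundedI) blast
  then obtain y r2 where r2: "strict_mono r2" "(w \<circ> r2) \<longlonglongrightarrow> y"
    using bounded_imp_convergent_subsequence by blast
  have yQ: "y \<in> Q" using Lim_in_closed_set[OF Q(1) _ _ r2(2)] wQ by simp
  have rlim: "(\<lambda>k. r (r2 k)) \<longlonglongrightarrow> 0"
  proof (rule Lim_null_comparison)
    show "eventually (\<lambda>k. norm (r (r2 k)) \<le> \<eta> (r2 k) * Z) sequentially"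
    proof (rule always_eventually, rule allI)
      fix k
      have "norm (r (r2 k)) \<le> \<eta> (r2 k) * (t (r2 k) * norm (lam (r2 k)))" using rb(1) by (simp add: algebra_simps)
      also have "\<dots> \<le> \<eta> (r2 k) * Z" using Z rb(2) by (simp add: mult_left_mono)
      finally show "norm (r (r2 k)) \<le> \<eta> (r2 k) * Z" .
    qed
    have "(\<lambda>k. \<eta> (r2 k)) \<longlonglongrightarrow> 0" using LIMSEQ_subseq_LIMSEQ[OF rb(3) r2(1)] by (simp add: o_def)
    from tendsto_mult[OF this tendsto_const[of Z]] show "(\<lambda>k. \<eta> (r2 k) * Z) \<longlonglongrightarrow> 0" by simp
  qed
  have Aeq: "At (lam k) = xsk k - Hm (w k) - r k" for k
    using eq lin(2) by (simp add: w_def linear_cmul algebra_simps)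
  have "(\<lambda>k. xsk (r2 k) - Hm (w (r2 k)) - r (r2 k)) \<longlonglongrightarrow> xs - Hm y - 0"
    by (intro tendsto_diff LIMSEQ_subseq_LIMSEQ[OF xs r2(1), unfolded o_def] rlim
        lin_tendsto[OF lin(2) r2(2)[unfolded o_def]])
  then have Alim: "(\<lambda>k. At (lam (r2 k))) \<longlonglongrightarrow> xs - Hm y" using Aeq by simp
  have "xs - Hm y \<in> At ` Q"
    by (rule Lim_in_closed_set[OF Q(3) _ _ Alim]) (use Q(5) in auto)
  then obtain z where z: "z \<in> Q" "At z = xs - Hm y" by (metis imageE)
  have l1: "(\<lambda>k. At (w (r2 k))) \<longlonglongrightarrow> At y" using lin_tendsto[OF lin(1) r2(2)[unfolded o_def]] .
  have e1: "(\<lambda>k. At (w (r2 k))) = (\<lambda>k. t (r2 k) *\<^sub>R At (lam (r2 k)))"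
    using lin(1) by (simp add: w_def linear_cmul)
  have "(\<lambda>k. t (r2 k) *\<^sub>R At (lam (r2 k))) \<longlonglongrightarrow> 0 *\<^sub>R (xs - Hm y)"
    by (intro tendsto_scaleR Alim LIMSEQ_subseq_LIMSEQ[OF t(2) r2(1), unfolded o_def])
  then have l2: "(\<lambda>k. At (w (r2 k))) \<longlonglongrightarrow> 0" unfolding e1 by simp
  have Ay: "At y = 0" using LIMSEQ_unique[OF l1 l2] .
  have "z \<in> tangent_cone K y" using TK[OF Q(2) Q(4) yQ z(1)] .
  moreover have "xs = Hm y + At z" using z by simp
  ultimately show ?thesis using Ay yQ Q(4) by blast
qed

lemma LemB:
  fixes At :: "'b::euclidean_space \<Rightarrow> 'a::euclidean_space" and Hm :: "'b \<Rightarrow> 'a"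
  assumes lin: "linear At" "linear Hm"
    and Q: "closed Q" "convex_cone Q" "closed (At ` Q)" "Q \<subseteq> K" "\<forall>k. lam k \<in> Q"
    and t: "\<forall>k. t k > 0" "t \<longlonglongrightarrow> 0"
    and xs: "xsk \<longlonglongrightarrow> xs"
    and eq: "\<forall>k. xsk k = At (lam k) + t k *\<^sub>R Hm (lam k) + r k"
    and rb: "\<forall>k. norm (r k) \<le> t k * \<eta> k * norm (lam k)" "\<forall>k. \<eta> k \<ge> 0" "\<eta> \<longlonglongrightarrow> 0"
    and big: "filterlim (\<lambda>k. norm (lam k)) at_top sequentially"
    and rho: "filterlim (\<lambda>k. t k * norm (lam k)) at_top sequentially"
    and qual: "\<And>y z. At y = 0 \<Longrightarrow> Hm y + At z = 0 \<Longrightarrow> y \<in> K \<Longrightarrow> z \<in> tangent_cone K y \<Longrightarrow> y = 0"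
  shows False
proof -
  define n where "n k = norm (lam k)" for k
  define lh where "lh k = (1 / n k) *\<^sub>R lam k" for k
  have lhQ: "lh k \<in> Q" for k using Q(2,5) by (simp add: lh_def n_def convex_cone_scaleR)
  have nlh: "norm (lh k) \<le> 1" for k
    by (cases "lam k = 0") (simp_all add: lh_def n_def)
  then have "bounded (range lh)" by (intro boundedI) blast
  then obtain yh r2 where r2: "strict_mono r2" "(lh \<circ> r2) \<longlonglongrightarrow> yh"
    using bounded_imp_convergent_subsequence by blast
  have r2': "(\<lambda>k. lh (r2 k)) \<longlonglongrightarrow> yh" using r2(2) by (simp add: o_def)
  have yQ: "yh \<in> Q" using Lim_in_closed_set[OF Q(1) _ _ r2(2)] lhQ by simp
  have ev1: "eventually (\<lambda>k. 1 \<le> n k) sequentially"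
    using big unfolding filterlim_at_top n_def by blast
  then have ev1': "eventually (\<lambda>k. 1 \<le> n (r2 k)) sequentially" using eventually_subseq[OF r2(1)] by blast
  have "eventually (\<lambda>k. norm (lh (r2 k)) = 1) sequentially"
    using ev1'
  proof (rule eventually_mono)
    fix k assume "1 \<le> n (r2 k)"
    then have "n (r2 k) \<noteq> 0" by linarith
    then show "norm (lh (r2 k)) = 1" by (simp add: lh_def n_def)
  qed
  moreover have "(\<lambda>k. norm (lh (r2 k))) \<longlonglongrightarrow> norm yh" using tendsto_norm[OF r2'] .
  ultimately have "(\<lambda>k. 1::real) \<longlonglongrightarrow> norm yh" using tendsto_cong by (metis (mono_tags, lifting) eventually_mono)
  then have nyh: "norm yh = 1" using LIMSEQ_unique tendsto_const by metis
  have inv_n: "(\<lambda>k. 1 / n (r2 k)) \<longlonglongrightarrow> 0"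
  proof -
    have "filterlim (\<lambda>k. n (r2 k)) at_top sequentially"
      using filterlim_compose[OF big filterlim_subseq[OF r2(1)]] by (simp add: n_def)
    then show ?thesis using tendsto_inverse_0_at_top by (simp add: divide_inverse)
  qed
  have xsr: "(\<lambda>k. xsk (r2 k)) \<longlonglongrightarrow> xs" using LIMSEQ_subseq_LIMSEQ[OF xs r2(1)] by (simp add: o_def)
  have tr: "(\<lambda>k. t (r2 k)) \<longlonglongrightarrow> 0" using LIMSEQ_subseq_LIMSEQ[OF t(2) r2(1)] by (simp add: o_def)
  have etar: "(\<lambda>k. \<eta> (r2 k)) \<longlonglongrightarrow> 0" using LIMSEQ_subseq_LIMSEQ[OF rb(3) r2(1)] by (simp add: o_def)
  have id1: "At (lh k) = (1 / n k) *\<^sub>R xsk k - t k *\<^sub>R Hm (lh k) - (1 / n k) *\<^sub>R r k" for k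
  proof -
    have "At (lh k) = (1 / n k) *\<^sub>R At (lam k)" using lin(1) by (simp add: lh_def linear_cmul)
    also have "At (lam k) = xsk k - t k *\<^sub>R Hm (lam k) - r k" using eq by (simp add: algebra_simps)
    also have "Hm (lam k) = n k *\<^sub>R Hm (lh k)"
      using lin(2) by (cases "n k = 0") (simp_all add: lh_def linear_cmul linear_0 n_def)
    finally show ?thesis
      using lin(2) by (cases "n k = 0") (simp_all add: algebra_simps n_def lh_def linear_0)
  qed
  have rn: "norm ((1 / n k) *\<^sub>R r k) \<le> t k * \<eta> k" for k
  proof (cases "n k = 0")
    case True
    have "0 \<le> t k * \<eta> k" using t(1) rb(2) by (simp add: less_imp_le)
    then show ?thesis using True by simp
  next
    case False
    then have np: "n k > 0" by (simp add: n_def)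
    have "norm ((1 / n k) *\<^sub>R r k) = norm (r k) / n k" by (simp add: n_def)
    also have "\<dots> \<le> (t k * \<eta> k * n k) / n k" using rb(1) np unfolding n_def
      by (intro divide_right_mono) auto
    also have "\<dots> = t k * \<eta> k" using np by simp
    finally show ?thesis .
  qed
  have "(\<lambda>k. (1 / n (r2 k)) *\<^sub>R xsk (r2 k) - t (r2 k) *\<^sub>R Hm (lh (r2 k)) - (1 / n (r2 k)) *\<^sub>R r (r2 k))
        \<longlonglongrightarrow> 0 *\<^sub>R xs - 0 *\<^sub>R Hm yh - 0"
  proof (intro tendsto_diff tendsto_scaleR inv_n xsr tr lin_tendsto[OF lin(2) r2'])
    show "(\<lambda>k. (1 / n (r2 k)) *\<^sub>R r (r2 k)) \<longlonglongrightarrow> 0"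
    proof (rule Lim_null_comparison)
      show "eventually (\<lambda>k. norm ((1 / n (r2 k)) *\<^sub>R r (r2 k)) \<le> t (r2 k) * \<eta> (r2 k)) sequentially"
        using rn by simp
      show "(\<lambda>k. t (r2 k) * \<eta> (r2 k)) \<longlonglongrightarrow> 0" using tendsto_mult[OF tr etar] by simp
    qed
  qed
  then have "(\<lambda>k. At (lh (r2 k))) \<longlonglongrightarrow> 0" using id1 by simp
  moreover have "(\<lambda>k. At (lh (r2 k))) \<longlonglongrightarrow> At yh" using lin_tendsto[OF lin(1) r2'] .
  ultimately have Ay: "At yh = 0" using LIMSEQ_unique by metis
  define rh where "rh k = t k * n k" for k
  define zk where "zk k = (1 / rh k) *\<^sub>R lam k" for k
  have zQ: "zk k \<in> Q" for k
  proof -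
    have "1 / rh k \<ge> 0" using t(1)[rule_format, of k] by (simp add: rh_def n_def less_imp_le)
    then show ?thesis using Q(2,5) unfolding zk_def by (simp add: convex_cone_scaleR)
  qed
  have id2: "At (zk k) = (1 / rh k) *\<^sub>R xsk k - Hm (lh k) - (1 / rh k) *\<^sub>R r k" for k
  proof -
    have tk: "t k \<noteq> 0" using t(1) by (metis less_irrefl)
    have "At (zk k) = (1 / rh k) *\<^sub>R At (lam k)" using lin(1) by (simp add: zk_def linear_cmul)
    also have "At (lam k) = xsk k - t k *\<^sub>R Hm (lam k) - r k" using eq by (simp add: algebra_simps)
    also have "(1 / rh k) *\<^sub>R (t k *\<^sub>R Hm (lam k)) = Hm (lh k)"
      using lin(2) tk by (cases "n k = 0") (simp_all add: lh_def rh_def linear_cmul linear_0 n_def)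
    then have "(1 / rh k) *\<^sub>R (xsk k - t k *\<^sub>R Hm (lam k) - r k)
          = (1 / rh k) *\<^sub>R xsk k - Hm (lh k) - (1 / rh k) *\<^sub>R r k"
      by (simp add: algebra_simps)
    finally show ?thesis .
  qed
  have rn2: "norm ((1 / rh k) *\<^sub>R r k) \<le> \<eta> k" for k
  proof (cases "rh k = 0")
    case True then show ?thesis using rb(2) by simp
  next
    case False
    then have np: "rh k > 0" using t(1) by (simp add: rh_def n_def)
    have "norm ((1 / rh k) *\<^sub>R r k) = norm (r k) / rh k" using np by simp
    also have "\<dots> \<le> (\<eta> k * rh k) / rh k" using rb(1) np
      by (intro divide_right_mono) (simp_all add: rh_def n_def algebra_simps)
    also have "\<dots> = \<eta> k" using np by simp
    finally show ?thesis .
  qed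
  have inv_rh: "(\<lambda>k. 1 / rh (r2 k)) \<longlonglongrightarrow> 0"
  proof -
    have "filterlim (\<lambda>k. rh (r2 k)) at_top sequentially"
      using filterlim_compose[OF rho filterlim_subseq[OF r2(1)]] by (simp add: rh_def n_def)
    then show ?thesis using tendsto_inverse_0_at_top by (simp add: divide_inverse)
  qed
  have "(\<lambda>k. (1 / rh (r2 k)) *\<^sub>R xsk (r2 k) - Hm (lh (r2 k)) - (1 / rh (r2 k)) *\<^sub>R r (r2 k))
        \<longlonglongrightarrow> 0 *\<^sub>R xs - Hm yh - 0"
  proof (intro tendsto_diff tendsto_scaleR inv_rh xsr lin_tendsto[OF lin(2) r2'])
    show "(\<lambda>k. (1 / rh (r2 k)) *\<^sub>R r (r2 k)) \<longlonglongrightarrow> 0"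
    proof (rule Lim_null_comparison)
      show "eventually (\<lambda>k. norm ((1 / rh (r2 k)) *\<^sub>R r (r2 k)) \<le> \<eta> (r2 k)) sequentially"
        using rn2 by simp
      show "(\<lambda>k. \<eta> (r2 k)) \<longlonglongrightarrow> 0" by (rule etar)
    qed
  qed
  then have Azl: "(\<lambda>k. At (zk (r2 k))) \<longlonglongrightarrow> - Hm yh" using id2 by simp
  have "- Hm yh \<in> At ` Q"
    by (rule Lim_in_closed_set[OF Q(3) _ _ Azl]) (use zQ in auto)
  then obtain z where z: "z \<in> Q" "At z = - Hm yh" by (metis imageE)
  have "Hm yh + At z = 0" using z by simp
  moreover have "z \<in> tangent_cone K yh" using TK[OF Q(2) Q(4) yQ z(1)] .
  moreover have "yh \<in> K" using yQ Q(4) by blast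
  ultimately have "yh = 0" using qual Ay by blast
  then show False using nyh by simp
qed

lemma CORE1:
  fixes At :: "'b::euclidean_space \<Rightarrow> 'a::euclidean_space" and Hm :: "'b \<Rightarrow> 'a"
  assumes lin: "linear At" "linear Hm"
    and Q: "closed Q" "convex_cone Q" "closed (At ` Q)" "Q \<subseteq> K" "\<forall>k. lam k \<in> Q"
    and t: "\<forall>k. t k > 0" "t \<longlonglongrightarrow> 0"
    and xs: "xsk \<longlonglongrightarrow> xs"
    and eq: "\<forall>k. xsk k = At (lam k) + t k *\<^sub>R Hm (lam k) + r k"
    and rb: "\<forall>k. norm (r k) \<le> t k * \<eta> k * norm (lam k)" "\<forall>k. \<eta> k \<ge> 0" "\<eta> \<longlonglongrightarrow> 0"
    and big: "filterlim (\<lambda>k. norm (lam k)) at_top sequentially"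
    and qual: "\<And>y z. At y = 0 \<Longrightarrow> Hm y + At z = 0 \<Longrightarrow> y \<in> K \<Longrightarrow> z \<in> tangent_cone K y \<Longrightarrow> y = 0"
  shows "\<exists>y z. xs = Hm y + At z \<and> y \<in> K \<and> At y = 0 \<and> z \<in> tangent_cone K y"
proof (cases "filterlim (\<lambda>k. t k * norm (lam k)) at_top sequentially")
  case True
  have False by (rule LemB[OF lin Q t xs eq rb big True qual])
  then show ?thesis ..
next
  case False
  then obtain Z where "\<not> eventually (\<lambda>k. Z \<le> t k * norm (lam k)) sequentially"
    unfolding filterlim_at_top by blast
  then have "infinite {k. \<not> Z \<le> t k * norm (lam k)}"
    unfolding cofinite_eq_sequentially[symmetric] eventually_cofinite by simp
  then obtain r3 :: "nat \<Rightarrow> nat" where r3: "strict_mono r3" "\<forall>n. r3 n \<in> {k. \<not> Z \<le> t k * norm (lam k)}"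
    using infinite_enumerate by blast
  show ?thesis
  proof (rule LemA[OF lin, of Q K "lam \<circ> r3" "t \<circ> r3" "xsk \<circ> r3" xs "r \<circ> r3" "\<eta> \<circ> r3" Z])
    show "closed Q" "convex_cone Q" "closed (At ` Q)" "Q \<subseteq> K" using Q by auto
    show "\<forall>k. (lam \<circ> r3) k \<in> Q" using Q(5) by simp
    show "\<forall>k. (t \<circ> r3) k > 0" using t(1) by simp
    show "(t \<circ> r3) \<longlonglongrightarrow> 0" using LIMSEQ_subseq_LIMSEQ[OF t(2) r3(1)] .
    show "(xsk \<circ> r3) \<longlonglongrightarrow> xs" using LIMSEQ_subseq_LIMSEQ[OF xs r3(1)] .
    show "\<forall>k. (xsk \<circ> r3) k = At ((lam \<circ> r3) k) + (t \<circ> r3) k *\<^sub>R Hm ((lam \<circ> r3) k) + (r \<circ> r3) k"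
      using eq by simp
    show "\<forall>k. norm ((r \<circ> r3) k) \<le> (t \<circ> r3) k * (\<eta> \<circ> r3) k * norm ((lam \<circ> r3) k)"
      using rb(1) by simp
    show "\<forall>k. (\<eta> \<circ> r3) k \<ge> 0" using rb(2) by simp
    show "(\<eta> \<circ> r3) \<longlonglongrightarrow> 0" using LIMSEQ_subseq_LIMSEQ[OF rb(3) r3(1)] .
    show "\<forall>k. (t \<circ> r3) k * norm ((lam \<circ> r3) k) \<le> Z" using r3(2) by (simp add: less_imp_le not_le)
  qed
qed

lemma CORE:
  fixes At :: "'b::euclidean_space \<Rightarrow> 'a::euclidean_space" and Hm :: "'b \<Rightarrow> 'a"
  assumes lin: "linear At" "linear Hm"
    and QQ: "finite \<Q>" "\<forall>Q\<in>\<Q>. closed Q \<and> convex_cone Q \<and> closed (At ` Q)"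
    and QK: "\<And>(r::nat\<Rightarrow>nat) Q. strict_mono r \<Longrightarrow> (\<forall>n. Qk (r n) = Q) \<Longrightarrow> Q \<subseteq> K"
    and lamQ: "\<forall>k. Qk k \<in> \<Q> \<and> lam k \<in> Qk k"
    and t: "\<forall>k. t k > 0" "t \<longlonglongrightarrow> 0"
    and xs: "xsk \<longlonglongrightarrow> xs"
    and eq: "\<forall>k. xsk k = At (lam k) + t k *\<^sub>R Hm (lam k) + r k"
    and rb: "\<forall>k. norm (r k) \<le> t k * \<eta> k * norm (lam k)" "\<forall>k. \<eta> k \<ge> 0" "\<eta> \<longlonglongrightarrow> 0"
    and big: "filterlim (\<lambda>k. norm (lam k)) at_top sequentially"
    and qual: "\<And>y z. At y = 0 \<Longrightarrow> Hm y + At z = 0 \<Longrightarrow> y \<in> K \<Longrightarrow> z \<in> tangent_cone K y \<Longrightarrow> y = 0"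
  shows "\<exists>y z. xs = Hm y + At z \<and> y \<in> K \<and> At y = 0 \<and> z \<in> tangent_cone K y"
proof -
  have "range Qk \<subseteq> \<Q>" using lamQ by blast
  then have "finite (range Qk)" using QQ(1) finite_subset by blast
  then obtain r1 :: "nat \<Rightarrow> nat" and Q where r1: "strict_mono r1" "\<forall>n. Qk (r1 n) = Q"
    using subseq_const by blast
  have "Q \<in> \<Q>" using lamQ r1(2) by metis
  then have "closed Q" "convex_cone Q" "closed (At ` Q)" using QQ(2) by auto
  moreover have "Q \<subseteq> K" using QK[OF r1] .
  ultimately have Qp: "closed Q" "convex_cone Q" "closed (At ` Q)" "Q \<subseteq> K" by auto
  show ?thesis
  proof (rule CORE1[OF lin Qp, of "lam \<circ> r1" "t \<circ> r1" "xsk \<circ> r1" xs "r \<circ> r1" "\<eta> \<circ> r1"])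
    show "\<forall>k. (lam \<circ> r1) k \<in> Q"
    proof
      fix k
      have "lam (r1 k) \<in> Qk (r1 k)" using lamQ by blast
      then show "(lam \<circ> r1) k \<in> Q" using r1(2) by simp
    qed
    show "\<forall>k. (t \<circ> r1) k > 0" using t(1) by simp
    show "(t \<circ> r1) \<longlonglongrightarrow> 0" using LIMSEQ_subseq_LIMSEQ[OF t(2) r1(1)] .
    show "(xsk \<circ> r1) \<longlonglongrightarrow> xs" using LIMSEQ_subseq_LIMSEQ[OF xs r1(1)] .
    show "\<forall>k. (xsk \<circ> r1) k = At ((lam \<circ> r1) k) + (t \<circ> r1) k *\<^sub>R Hm ((lam \<circ> r1) k) + (r \<circ> r1) k"
      using eq by simp
    show "\<forall>k. norm ((r \<circ> r1) k) \<le> (t \<circ> r1) k * (\<eta> \<circ> r1) k * norm ((lam \<circ> r1) k)"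
      using rb(1) by simp
    show "\<forall>k. (\<eta> \<circ> r1) k \<ge> 0" using rb(2) by simp
    show "(\<eta> \<circ> r1) \<longlonglongrightarrow> 0" using LIMSEQ_subseq_LIMSEQ[OF rb(3) r1(1)] .
    show "filterlim (\<lambda>k. norm ((lam \<circ> r1) k)) at_top sequentially"
      using filterlim_compose[OF big filterlim_subseq[OF r1(1)]] by (simp add: o_def)
    show "\<And>y z. At y = 0 \<Longrightarrow> Hm y + At z = 0 \<Longrightarrow> y \<in> K \<Longrightarrow> z \<in> tangent_cone K y \<Longrightarrow> y = 0"
      by (rule qual)
  qed
qed

lemma DQ0:
  fixes g :: "'a::real_normed_vector \<Rightarrow> 'c::real_normed_vector"
  assumes gd: "(g has_derivative G) (at x0)" and xk: "xk \<longlonglongrightarrow> x0"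
  shows "(\<lambda>k. (1 / norm (xk k - x0)) *\<^sub>R (g (xk k) - g x0 - G (xk k - x0))) \<longlonglongrightarrow> 0"
  unfolding LIMSEQ_iff
proof (intro allI impI)
  fix r :: real assume r: "r > 0"
  obtain \<delta> where \<delta>: "\<delta> > 0" "\<forall>y. norm (y - x0) < \<delta> \<longrightarrow> norm (g y - g x0 - G (y - x0)) \<le> (r/2) * norm (y - x0)"
    using gd r unfolding has_derivative_at_alt by (meson half_gt_zero)
  obtain N where N: "\<forall>n\<ge>N. norm (xk n - x0) < \<delta>" using xk \<delta>(1) unfolding LIMSEQ_iff by blast
  have "norm ((1 / norm (xk n - x0)) *\<^sub>R (g (xk n) - g x0 - G (xk n - x0)) - 0) < r" if n: "n \<ge> N" for n
  proof (cases "xk n = x0")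
    case True then show ?thesis using r by simp
  next
    case False
    then have tp: "norm (xk n - x0) > 0" by simp
    have "norm ((1 / norm (xk n - x0)) *\<^sub>R (g (xk n) - g x0 - G (xk n - x0)))
        = norm (g (xk n) - g x0 - G (xk n - x0)) / norm (xk n - x0)" by simp
    also have "\<dots> \<le> ((r/2) * norm (xk n - x0)) / norm (xk n - x0)"
      using \<delta>(2) N n tp by (intro divide_right_mono) auto
    also have "\<dots> = r / 2" using tp by simp
    finally have "norm ((1 / norm (xk n - x0)) *\<^sub>R (g (xk n) - g x0 - G (xk n - x0))) \<le> r / 2" .
    then have "norm ((1 / norm (xk n - x0)) *\<^sub>R (g (xk n) - g x0 - G (xk n - x0))) < r" using r by linarith
    then show ?thesis by simp
  qed
  then show "\<exists>no. \<forall>n\<ge>no. norm ((1 / norm (xk n - x0)) *\<^sub>R (g (xk n) - g x0 - G (xk n - x0)) - 0) < r"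
    by blast
qed

lemma DQ:
  fixes g :: "'a::real_normed_vector \<Rightarrow> 'c::real_normed_vector"
  assumes gd: "(g has_derivative G) (at x0)" and xk: "xk \<longlonglongrightarrow> x0"
    and dir: "(\<lambda>k. (1 / norm (xk k - x0)) *\<^sub>R (xk k - x0)) \<longlonglongrightarrow> u"
  shows "(\<lambda>k. (1 / norm (xk k - x0)) *\<^sub>R (g (xk k) - g x0)) \<longlonglongrightarrow> G u"
proof -
  have bl: "bounded_linear G" using gd by (rule has_derivative_bounded_linear)
  have eq: "(1 / norm (xk k - x0)) *\<^sub>R (g (xk k) - g x0)
      = (1 / norm (xk k - x0)) *\<^sub>R (g (xk k) - g x0 - G (xk k - x0)) + G ((1 / norm (xk k - x0)) *\<^sub>R (xk k - x0))" for k
  proof -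
    have lc: "\<And>c x. G (c *\<^sub>R x) = c *\<^sub>R G x" using linear_cmul[OF bounded_linear.linear[OF bl]] by blast
    show ?thesis by (simp only: lc) (simp add: scaleR_diff_right)
  qed
  have "(\<lambda>k. (1 / norm (xk k - x0)) *\<^sub>R (g (xk k) - g x0 - G (xk k - x0)) + G ((1 / norm (xk k - x0)) *\<^sub>R (xk k - x0)))
      \<longlonglongrightarrow> 0 + G u"
    by (intro tendsto_add DQ0[OF gd xk] bounded_linear.tendsto[OF bl dir])
  then show ?thesis unfolding eq by simp
qed

lemma ADJ_NORM:
  fixes F :: "'a::euclidean_space \<Rightarrow>\<^sub>L 'b::euclidean_space"
  shows "norm (adjoint (blinfun_apply F) y) \<le> norm F * norm y"
proof (cases "adjoint (blinfun_apply F) y = 0")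
  case True then show ?thesis by simp
next
  case False
  let ?a = "adjoint (blinfun_apply F) y"
  have "norm ?a * norm ?a = inner ?a ?a" by (simp add: power2_eq_square[symmetric] power2_norm_eq_inner)
  also have "\<dots> = inner (blinfun_apply F ?a) y" by (rule adj_inner)
  also have "\<dots> \<le> norm (blinfun_apply F ?a) * norm y" by (rule norm_cauchy_schwarz)
  also have "\<dots> \<le> (norm F * norm ?a) * norm y" by (intro mult_right_mono norm_blinfun) simp
  finally have "norm ?a * norm ?a \<le> norm ?a * (norm F * norm y)" by (simp add: algebra_simps)
  then show ?thesis using False by simp
qed

lemma ADJ_DIFF:
  fixes F H :: "'a::euclidean_space \<Rightarrow>\<^sub>L 'b::euclidean_space"
  shows "adjoint (blinfun_apply F) y - adjoint (blinfun_apply H) y = adjoint (blinfun_apply (F - H)) y"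
proof -
  have "\<forall>x. inner x (adjoint (blinfun_apply F) y - adjoint (blinfun_apply H) y) = inner x (adjoint (blinfun_apply (F - H)) y)"
    by (simp add: inner_diff_right adj_inner blinfun.diff_left inner_diff_left)
  then show ?thesis using vector_eq_ldot by blast
qed

lemma ADJ_SCALE:
  fixes F :: "'a::euclidean_space \<Rightarrow>\<^sub>L 'b::euclidean_space"
  shows "adjoint (blinfun_apply (c *\<^sub>R F)) y = c *\<^sub>R adjoint (blinfun_apply F) y"
proof -
  have "\<forall>x. inner x (adjoint (blinfun_apply (c *\<^sub>R F)) y) = inner x (c *\<^sub>R adjoint (blinfun_apply F) y)"
    by (simp add: adj_inner blinfun.scaleR_left)
  then show ?thesis using vector_eq_ldot by blast
qed

lemma LIM_CODERIV:
  fixes g :: "'a::euclidean_space \<Rightarrow> 'b::euclidean_space"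
  assumes gd: "(g has_derivative blinfun_apply G) (at x0)"
    and lam: "lam \<in> limiting_normal_cone D (g x0)"
  shows "adjoint (blinfun_apply G) lam \<in> limiting_coderiv (\<lambda>x. (\<lambda>d. g x - d) ` D) x0 0 lam"
proof -
  obtain zk vk where z: "g x0 \<in> D" "\<forall>k. zk k \<in> D" "zk \<longlonglongrightarrow> g x0" "vk \<longlonglongrightarrow> lam"
      "\<forall>k. vk k \<in> regular_normal_cone D (zk k)"
    using lam unfolding limiting_normal_cone_def by blast
  let ?G = "gph (\<lambda>x. (\<lambda>d. g x - d) ` D)"
  have in0: "(x0, 0) \<in> ?G" using z(1) gph_char[of x0 0 g D] by simp
  have reg: "(adjoint (blinfun_apply G) (vk k), - vk k) \<in> regular_normal_cone ?G (x0, g x0 - zk k)" for k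
  proof -
    have "g x0 - (g x0 - zk k) = zk k" by simp
    then show ?thesis using GR[OF gd, of "g x0 - zk k" D "vk k"] z(2,5) by simp
  qed
  have l1: "(\<lambda>k. (x0, g x0 - zk k)) \<longlonglongrightarrow> (x0, 0)"
    using tendsto_Pair[OF tendsto_const[of x0] tendsto_diff[OF tendsto_const[of "g x0"] z(3)]] by simp
  have l2: "(\<lambda>k. (adjoint (blinfun_apply G) (vk k), - vk k)) \<longlonglongrightarrow> (adjoint (blinfun_apply G) lam, - lam)"
    by (intro tendsto_Pair tendsto_minus lin_tendsto[OF adjoint_linear[OF lin_bl] z(4)] z(4))
  have gk: "\<forall>k. (x0, g x0 - zk k) \<in> ?G"
  proof
    fix k
    have "g x0 - (g x0 - zk k) \<in> D" using z(2) by simp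
    then show "(x0, g x0 - zk k) \<in> ?G" using gph_char[of x0 "g x0 - zk k" g D] by blast
  qed
  have "(adjoint (blinfun_apply G) lam, - lam) \<in> limiting_normal_cone ?G (x0, 0)"
    unfolding limiting_normal_cone_def mem_Collect_eq
    apply (rule conjI[OF in0])
    apply (rule exI[of _ "\<lambda>k. (x0, g x0 - zk k)"], rule exI[of _ "\<lambda>k. (adjoint (blinfun_apply G) (vk k), - vk k)"])
    apply (intro conjI) apply (rule gk) apply (rule l1) apply (rule l2) using reg by blast
  then show ?thesis unfolding limiting_coderiv_def by simp
qed

lemma DIR_CODERIV:
  fixes g :: "'a::euclidean_space \<Rightarrow> 'b::euclidean_space" and T :: "'b set"
  assumes gd: "\<And>x. (g has_derivative blinfun_apply (Dg x)) (at x)"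
    and Dgc: "isCont Dg x0"
    and loc: "\<forall>w. norm w < \<epsilon> \<longrightarrow> (g x0 + w \<in> D \<longleftrightarrow> w \<in> T)" and e: "\<epsilon> > 0"
    and co: "conic T"
    and u: "norm u = 1"
    and lam: "lam \<in> limiting_normal_cone T (blinfun_apply (Dg x0) u)"
  shows "adjoint (blinfun_apply (Dg x0)) lam \<in> dir_limiting_coderiv (\<lambda>x. (\<lambda>d. g x - d) ` D) x0 0 u 0 lam"
proof -
  let ?G = "gph (\<lambda>x. (\<lambda>d. g x - d) ` D)"
  let ?v = "blinfun_apply (Dg x0) u"
  obtain vi li where vi: "?v \<in> T" "\<forall>i. vi i \<in> T" "vi \<longlonglongrightarrow> ?v" "li \<longlonglongrightarrow> lam"
      "\<forall>i. li i \<in> regular_normal_cone T (vi i)"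
    using lam unfolding limiting_normal_cone_def by blast
  have "0 \<in> T" using co vi(1) conicD[of T ?v 0] by simp
  then have "g x0 + 0 \<in> D" using loc[rule_format, of 0] e by simp
  then have in0: "(x0, 0) \<in> ?G" using gph_char[of x0 0 g D] by simp
  define \<tau> where "\<tau> i = min (inverse (real (Suc i))) (\<epsilon> / (4 * (norm (vi i) + 1)))" for i
  have tpos: "\<tau> i > 0" for i using e by (simp add: \<tau>_def add_nonneg_pos)
  have t0: "\<tau> \<longlonglongrightarrow> 0"
  proof (rule Lim_null_comparison)
    show "eventually (\<lambda>i. norm (\<tau> i) \<le> inverse (real (Suc i))) sequentially"
      using tpos by (intro always_eventually allI) (simp add: \<tau>_def less_imp_le)
    show "(\<lambda>i. inverse (real (Suc i))) \<longlonglongrightarrow> 0" by (rule LIMSEQ_inverse_real_of_nat)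
  qed
  define w where "w i = \<tau> i *\<^sub>R vi i" for i
  have wT: "w i \<in> T" for i using co vi(2) tpos by (simp add: w_def conicD less_imp_le)
  have wsmall: "norm (w i) < \<epsilon> / 2" for i
  proof -
    have "norm (w i) = \<tau> i * norm (vi i)" using tpos by (simp add: w_def less_imp_le)
    also have "\<dots> \<le> (\<epsilon> / (4 * (norm (vi i) + 1))) * norm (vi i)"
      by (intro mult_right_mono) (simp_all add: \<tau>_def)
    also have "\<dots> = (\<epsilon> / 4) * (norm (vi i) / (norm (vi i) + 1))" by (simp add: field_simps)
    also have "\<dots> \<le> (\<epsilon> / 4) * 1"
    proof (intro mult_left_mono)
      show "norm (vi i) / (norm (vi i) + 1) \<le> 1" by (subst divide_le_eq_1) (simp add: add_nonneg_pos)
    qed (use e in simp)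
    finally show ?thesis using e by simp
  qed
  have wD: "g x0 + w i \<in> D" for i using loc wT wsmall e
    by (metis field_sum_of_halves less_add_same_cancel1 order_less_trans half_gt_zero)
  have liN: "li i \<in> regular_normal_cone D (g x0 + w i)" for i
  proof -
    have "regular_normal_cone D (g x0 + w i) = regular_normal_cone T (w i)"
      by (rule RN_shift[OF loc wsmall wT])
    also have "\<dots> = regular_normal_cone T (vi i)" unfolding w_def by (rule RN_scale[OF co tpos])
    finally show ?thesis using vi(5) by simp
  qed
  define x where "x i = x0 + \<tau> i *\<^sub>R u" for i
  define y where "y i = g (x i) - (g x0 + w i)" for i
  have regi: "(adjoint (blinfun_apply (Dg (x i))) (li i), - li i) \<in> regular_normal_cone ?G (x i, y i)" for i
  proof -
    have "g (x i) - y i = g x0 + w i" by (simp add: y_def)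
    then show ?thesis using GR[OF gd, of "x i" "y i" D "li i"] wD liN by simp
  qed
  have xlim: "x \<longlonglongrightarrow> x0"
  proof -
    have "(\<lambda>i. x0 + \<tau> i *\<^sub>R u) \<longlonglongrightarrow> x0 + 0 *\<^sub>R u" by (intro tendsto_add tendsto_const tendsto_scaleR t0)
    then show ?thesis by (simp add: x_def[abs_def])
  qed
  have nx: "norm (x i - x0) = \<tau> i" for i using tpos u by (simp add: x_def less_imp_le)
  have dirx: "(\<lambda>i. (1 / norm (x i - x0)) *\<^sub>R (x i - x0)) \<longlonglongrightarrow> u"
  proof -
    have "(1 / norm (x i - x0)) *\<^sub>R (x i - x0) = u" for i using tpos[of i] nx[of i] by (simp add: x_def)
    then show ?thesis by simp
  qed
  have dq: "(\<lambda>i. (1 / \<tau> i) *\<^sub>R (g (x i) - g x0)) \<longlonglongrightarrow> ?v"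
    using DQ[OF gd xlim dirx] nx by simp
  have yeq: "(1 / \<tau> i) *\<^sub>R y i = (1 / \<tau> i) *\<^sub>R (g (x i) - g x0) - vi i" for i
    using tpos[of i] by (simp add: y_def w_def algebra_simps)
  have ylim: "(\<lambda>i. (1 / \<tau> i) *\<^sub>R y i) \<longlonglongrightarrow> 0"
  proof -
    have "(\<lambda>i. (1 / \<tau> i) *\<^sub>R (g (x i) - g x0) - vi i) \<longlonglongrightarrow> ?v - ?v" by (intro tendsto_diff dq vi(3))
    then show ?thesis unfolding yeq by simp
  qed
  define dk where "dk i = (u, (1 / \<tau> i) *\<^sub>R y i)" for i
  have dkl: "dk \<longlonglongrightarrow> (u, 0)" unfolding dk_def[abs_def] by (intro tendsto_Pair tendsto_const ylim)
  have pt: "(x0, 0) + \<tau> i *\<^sub>R dk i = (x i, y i)" for i using tpos[of i] by (simp add: dk_def x_def)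
  define vk where "vk i = (adjoint (blinfun_apply (Dg (x i))) (li i), - li i)" for i
  have Dgl: "(\<lambda>i. Dg (x i)) \<longlonglongrightarrow> Dg x0" using isCont_tendsto_compose[OF Dgc xlim] .
  have adjl: "(\<lambda>i. adjoint (blinfun_apply (Dg (x i))) (li i)) \<longlonglongrightarrow> adjoint (blinfun_apply (Dg x0)) lam"
  proof -
    have "(\<lambda>i. adjoint (blinfun_apply (Dg (x i))) (li i) - adjoint (blinfun_apply (Dg x0)) lam) \<longlonglongrightarrow> 0"
    proof (rule Lim_null_comparison)
      let ?b = "\<lambda>i. norm (Dg (x i) - Dg x0) * norm (li i) + norm (Dg x0) * norm (li i - lam)"
      show "eventually (\<lambda>i. norm (adjoint (blinfun_apply (Dg (x i))) (li i) - adjoint (blinfun_apply (Dg x0)) lam) \<le> ?b i) sequentially"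
      proof (intro always_eventually allI)
        fix i
        have eq: "adjoint (blinfun_apply (Dg (x i))) (li i) - adjoint (blinfun_apply (Dg x0)) lam
            = adjoint (blinfun_apply (Dg (x i) - Dg x0)) (li i) + adjoint (blinfun_apply (Dg x0)) (li i - lam)"
        proof -
          have "adjoint (blinfun_apply (Dg x0)) (li i - lam) = adjoint (blinfun_apply (Dg x0)) (li i) - adjoint (blinfun_apply (Dg x0)) lam"
            using linear_diff[OF adjoint_linear[OF lin_bl]] by blast
          then show ?thesis using ADJ_DIFF[of "Dg (x i)" "li i" "Dg x0"] by (simp add: algebra_simps)
        qed
        have "norm (adjoint (blinfun_apply (Dg (x i))) (li i) - adjoint (blinfun_apply (Dg x0)) lam)
            \<le> norm (adjoint (blinfun_apply (Dg (x i) - Dg x0)) (li i)) + norm (adjoint (blinfun_apply (Dg x0)) (li i - lam))"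
          unfolding eq by (rule norm_triangle_ineq)
        also have "\<dots> \<le> ?b i" by (intro add_mono ADJ_NORM)
        finally show "norm (adjoint (blinfun_apply (Dg (x i))) (li i) - adjoint (blinfun_apply (Dg x0)) lam) \<le> ?b i" .
      qed
      have a: "(\<lambda>i. norm (Dg (x i) - Dg x0)) \<longlonglongrightarrow> 0"
        using tendsto_norm_zero[OF LIM_zero[OF Dgl]] .
      have b: "(\<lambda>i. norm (li i - lam)) \<longlonglongrightarrow> 0"
        using tendsto_norm_zero[OF LIM_zero[OF vi(4)]] .
      have "?b \<longlonglongrightarrow> 0 * norm lam + norm (Dg x0) * 0"
        by (intro tendsto_add tendsto_mult a b tendsto_const tendsto_norm vi(4))
      then show "?b \<longlonglongrightarrow> 0" by simp
    qed
    then show ?thesis using LIM_zero_iff by blast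
  qed
  have vkl: "vk \<longlonglongrightarrow> (adjoint (blinfun_apply (Dg x0)) lam, - lam)"
    unfolding vk_def[abs_def] by (intro tendsto_Pair tendsto_minus adjl vi(4))
  have "(adjoint (blinfun_apply (Dg x0)) lam, - lam) \<in> dir_limiting_normal_cone ?G (x0, 0) (u, 0)"
    unfolding dir_limiting_normal_cone_def mem_Collect_eq
    apply (rule conjI[OF in0])
    apply (rule exI[of _ \<tau>], rule exI[of _ dk], rule exI[of _ vk])
    apply (intro conjI)
        apply (simp add: tpos)
       apply (rule t0)
      apply (rule dkl)
     apply (rule vkl)
    using regi pt by (simp add: vk_def)
  then show ?thesis unfolding dir_limiting_coderiv_def by simp
qed

lemma MAIN:
  fixes g :: "'a::euclidean_space \<Rightarrow> 'b::euclidean_space"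
    and Dg :: "'a \<Rightarrow> ('a \<Rightarrow>\<^sub>L 'b)"
    and D2g :: "'a \<Rightarrow> ('a \<Rightarrow>\<^sub>L ('a \<Rightarrow>\<^sub>L 'b))"
  assumes g_deriv: "\<And>x. (g has_derivative blinfun_apply (Dg x)) (at x)"
    and Dg_deriv: "(Dg has_derivative blinfun_apply (D2g xb)) (at xb)"
    and eps: "\<epsilon> > 0" and fin: "finite \<S>" "\<forall>S\<in>\<S>. finite S"
    and T0: "T0 = (\<Union>S\<in>\<S>. convex_cone hull S)"
    and loc: "\<forall>w. norm w < \<epsilon> \<longrightarrow> (g xb + w \<in> D \<longleftrightarrow> w \<in> T0)"
    and gph_pt: "(xb, 0) \<in> gph (\<lambda>x. (\<lambda>d. g x - d) ` D)"
    and qual: "\<And>ys zs. adjoint (blinfun_apply (Dg xb)) ys = 0 \<Longrightarrow>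
        adjoint (blinfun_apply (blinfun_apply (D2g xb) u)) ys
          + adjoint (blinfun_apply (Dg xb)) zs = 0 \<Longrightarrow>
        ys \<in> limiting_normal_cone T0 (Dg xb u) \<Longrightarrow>
        zs \<in> tangent_cone (limiting_normal_cone T0 (Dg xb u)) ys \<Longrightarrow>
        ys = 0"
    and asym: "asym_limit (\<lambda>x. (\<lambda>d. g x - d) ` D) xb 0 u xs"
  shows "\<exists>y z. xs = adjoint (blinfun_apply (blinfun_apply (D2g xb) u)) y + adjoint (blinfun_apply (Dg xb)) z
       \<and> y \<in> limiting_normal_cone T0 (Dg xb u) \<and> adjoint (blinfun_apply (Dg xb)) y = 0
       \<and> z \<in> tangent_cone (limiting_normal_cone T0 (Dg xb u)) y"
proof -
  let ?G = "gph (\<lambda>x. (\<lambda>d. g x - d) ` D)"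
  define At where "At = adjoint (blinfun_apply (Dg xb))"
  define Hm where "Hm = adjoint (blinfun_apply (blinfun_apply (D2g xb) u))"
  define K where "K = limiting_normal_cone T0 (Dg xb u)"
  have linAt: "linear At" unfolding At_def by (rule adjoint_linear[OF lin_bl])
  have linHm: "linear Hm" unfolding Hm_def by (rule adjoint_linear[OF lin_bl])
  obtain xk yk xsk lk ys where A:
      "\<forall>k. (xk k, yk k) \<in> ?G"
      "\<forall>k. 0 \<notin> (\<lambda>d. g (xk k) - d) ` D"
      "\<forall>k. yk k \<noteq> 0"
      "\<forall>k. xsk k \<in> regular_coderiv (\<lambda>x. (\<lambda>d. g x - d) ` D) (xk k) (yk k) (lk k)"
      "xk \<longlonglongrightarrow> xb" "yk \<longlonglongrightarrow> 0" "xsk \<longlonglongrightarrow> xs"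
      "(\<lambda>k. (1 / norm (xk k - xb)) *\<^sub>R (xk k - xb)) \<longlonglongrightarrow> u"
      "(\<lambda>k. (1 / norm (xk k - xb)) *\<^sub>R (yk k - 0)) \<longlonglongrightarrow> 0"
      "filterlim (\<lambda>k. norm (lk k)) at_top sequentially"
    using asym unfolding asym_limit_def by blast
  have RGk: "lk k \<in> regular_normal_cone D (g (xk k) - yk k) \<and> xsk k = adjoint (blinfun_apply (Dg (xk k))) (lk k)" for k
    using RG[OF g_deriv] A(4) unfolding regular_coderiv_def by blast
  define tk where "tk k = norm (xk k - xb)" for k
  have tpos: "tk k > 0" for k
  proof -
    have "0 \<in> (\<lambda>d. g xb - d) ` D" using gph_pt unfolding gph_def by simp
    then have "xk k \<noteq> xb" using A(2) by metis
    then show ?thesis by (simp add: tk_def)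
  qed
  have t0: "tk \<longlonglongrightarrow> 0"
    unfolding tk_def[abs_def] using tendsto_norm_zero[OF LIM_zero[OF A(5)]] .
  define wk where "wk k = g (xk k) - yk k - g xb" for k
  have gxk: "g xb + wk k = g (xk k) - yk k" for k by (simp add: wk_def)
  have dD: "g (xk k) - yk k \<in> D" for k using A(1) gph_char by metis
  have gc: "isCont g xb" using has_derivative_continuous[OF g_deriv] by simp
  have wl: "wk \<longlonglongrightarrow> 0"
  proof -
    have "(\<lambda>k. g (xk k) - yk k - g xb) \<longlonglongrightarrow> g xb - 0 - g xb"
      by (intro tendsto_diff isCont_tendsto_compose[OF gc A(5)] A(6) tendsto_const)
    then show ?thesis by (simp add: wk_def[abs_def])
  qed
  have "\<epsilon> / 2 > 0" using eps by simp
  then obtain N where N: "\<forall>k\<ge>N. norm (wk k) < \<epsilon> / 2"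
    using wl unfolding LIMSEQ_iff by fastforce
  have wsmall: "norm (wk (k + N)) < \<epsilon> / 2" for k using N by simp
  have wT: "wk (k + N) \<in> T0" for k
  proof -
    have "norm (wk (k + N)) < \<epsilon>" using wsmall[of k] norm_ge_zero[of "wk (k + N)"] by linarith
    then show ?thesis using loc gxk dD by metis
  qed
  define Qk where "Qk k = regular_normal_cone T0 (wk (k + N))" for k
  have RNeq: "regular_normal_cone D (g (xk (k + N)) - yk (k + N)) = Qk k" for k
    unfolding Qk_def gxk[symmetric] by (rule RN_shift[OF loc wsmall wT])
  have T0cl: "closed T0" unfolding T0 using fin by (intro closed_UN) (auto intro: closed_convex_cone_hull)
  have T0co: "conic T0" unfolding T0 conic_def using conic_convex_cone_hull conicD by blast
  define W where "W k = Dg (xk k) - Dg xb - tk k *\<^sub>R blinfun_apply (D2g xb) u" for k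
  define \<eta> where "\<eta> k = norm (W k) / tk k" for k
  define rr where "rr k = adjoint (blinfun_apply (Dg (xk k))) (lk k) - At (lk k) - tk k *\<^sub>R Hm (lk k)" for k
  have rrW: "rr k = adjoint (blinfun_apply (W k)) (lk k)" for k
  proof -
    have "adjoint (blinfun_apply (W k)) (lk k) = adjoint (blinfun_apply (Dg (xk k) - Dg xb)) (lk k)
         - adjoint (blinfun_apply (tk k *\<^sub>R blinfun_apply (D2g xb) u)) (lk k)"
      unfolding W_def by (rule ADJ_DIFF[symmetric])
    also have "\<dots> = adjoint (blinfun_apply (Dg (xk k))) (lk k) - adjoint (blinfun_apply (Dg xb)) (lk k)
         - tk k *\<^sub>R adjoint (blinfun_apply (blinfun_apply (D2g xb) u)) (lk k)"
      by (simp only: ADJ_DIFF[symmetric] ADJ_SCALE)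
    finally show ?thesis by (simp add: rr_def At_def Hm_def)
  qed
  have rrb: "norm (rr k) \<le> tk k * \<eta> k * norm (lk k)" for k
  proof -
    have "norm (rr k) \<le> norm (W k) * norm (lk k)" unfolding rrW by (rule ADJ_NORM)
    also have "norm (W k) = tk k * \<eta> k" using tpos[of k] by (simp add: \<eta>_def)
    finally show ?thesis .
  qed
  have eta0: "\<eta> k \<ge> 0" for k using tpos[of k] by (simp add: \<eta>_def)
  have etal: "\<eta> \<longlonglongrightarrow> 0"
  proof -
    define uk where "uk k = (1 / tk k) *\<^sub>R (xk k - xb)" for k
    have ukl: "uk \<longlonglongrightarrow> u" using A(8) by (simp add: uk_def[abs_def] tk_def)
    have dq: "(\<lambda>k. (1 / tk k) *\<^sub>R (Dg (xk k) - Dg xb - blinfun_apply (D2g xb) (xk k - xb))) \<longlonglongrightarrow> 0"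
      unfolding tk_def by (rule DQ0[OF Dg_deriv A(5)])
    have bl2: "bounded_linear (blinfun_apply (D2g xb))" by (rule blinfun.bounded_linear_right)
    have l2: "(\<lambda>k. blinfun_apply (D2g xb) (uk k) - blinfun_apply (D2g xb) u) \<longlonglongrightarrow> 0"
      using LIM_zero[OF bounded_linear.tendsto[OF bl2 ukl]] .
    have eqW: "(1 / tk k) *\<^sub>R W k = (1 / tk k) *\<^sub>R (Dg (xk k) - Dg xb - blinfun_apply (D2g xb) (xk k - xb))
        + (blinfun_apply (D2g xb) (uk k) - blinfun_apply (D2g xb) u)" for k
    proof -
      have "xk k - xb = tk k *\<^sub>R uk k" using tpos[of k] by (simp add: uk_def)
      then have "blinfun_apply (D2g xb) (xk k - xb) = tk k *\<^sub>R blinfun_apply (D2g xb) (uk k)"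
        by (simp add: blinfun.scaleR_right)
      then show ?thesis using tpos[of k] unfolding W_def by (simp add: algebra_simps)
    qed
    have "(\<lambda>k. (1 / tk k) *\<^sub>R W k) \<longlonglongrightarrow> 0 + 0"
      unfolding eqW by (intro tendsto_add dq l2)
    then have "(\<lambda>k. norm ((1 / tk k) *\<^sub>R W k)) \<longlonglongrightarrow> 0" using tendsto_norm_zero by fastforce
    moreover have "norm ((1 / tk k) *\<^sub>R W k) = \<eta> k" for k using tpos[of k] by (simp add: \<eta>_def)
    ultimately show ?thesis by simp
  qed
  have QK: "Q \<subseteq> K" if r: "strict_mono (r::nat\<Rightarrow>nat)" and rQ: "\<forall>n. Qk (r n) = Q" for r Q
  proof
    fix \<mu> assume mu: "\<mu> \<in> Q"
    define j where "j n = r n + N" for n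
    have j: "strict_mono j" using r unfolding strict_mono_def j_def by simp
    define z where "z n = (1 / tk (j n)) *\<^sub>R wk (j n)" for n
    have zT: "z n \<in> T0" for n using T0co wT[of "r n"] tpos by (simp add: z_def j_def conicD less_imp_le)
    have zN: "\<mu> \<in> regular_normal_cone T0 (z n)" for n
    proof -
      have "\<mu> \<in> regular_normal_cone T0 (wk (j n))" using mu rQ unfolding Qk_def j_def by metis
      then show ?thesis unfolding z_def using RN_scale[OF T0co, of "1 / tk (j n)"] tpos[of "j n"] by simp
    qed
    have zeq: "z n = (1 / tk (j n)) *\<^sub>R (g (xk (j n)) - g xb) - (1 / tk (j n)) *\<^sub>R (yk (j n) - 0)" for n
      by (simp add: z_def wk_def algebra_simps)
    have dq: "(\<lambda>k. (1 / tk k) *\<^sub>R (g (xk k) - g xb)) \<longlonglongrightarrow> Dg xb u"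
      unfolding tk_def by (rule DQ[OF g_deriv A(5) A(8)])
    have "(\<lambda>n. (1 / tk (j n)) *\<^sub>R (g (xk (j n)) - g xb) - (1 / tk (j n)) *\<^sub>R (yk (j n) - 0)) \<longlonglongrightarrow> Dg xb u - 0"
      by (intro tendsto_diff LIMSEQ_subseq_LIMSEQ[OF dq j, unfolded o_def]
          LIMSEQ_subseq_LIMSEQ[OF A(9) j, unfolded o_def tk_def[symmetric]])
    then have zl: "z \<longlonglongrightarrow> Dg xb u" unfolding zeq[abs_def] by simp
    have vT: "Dg xb u \<in> T0" using Lim_in_closed_set[OF T0cl _ _ zl] zT by simp
    show "\<mu> \<in> K" unfolding K_def limiting_normal_cone_def mem_Collect_eq
      apply (rule conjI[OF vT])
      apply (rule exI[of _ z], rule exI[of _ "\<lambda>_. \<mu>"])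
      using zT zl zN by simp
  qed
  define r0 where "r0 k = k + N" for k
  have r0: "strict_mono r0" unfolding strict_mono_def r0_def by simp
  have "\<exists>y z. xs = Hm y + At z \<and> y \<in> K \<and> At y = 0 \<and> z \<in> tangent_cone K y"
  proof (rule CORE[where \<Q>="Qfam \<S>" and K=K and Qk=Qk and lam="lk \<circ> r0" and t="tk \<circ> r0"
        and xsk="xsk \<circ> r0" and xs=xs and r="rr \<circ> r0" and \<eta>="\<eta> \<circ> r0", OF linAt linHm])
    show "finite (Qfam \<S>)" by (rule finite_Qfam[OF fin])
    show "\<forall>Q\<in>Qfam \<S>. closed Q \<and> convex_cone Q \<and> closed (At ` Q)"
    proof
      fix Q assume "Q \<in> Qfam \<S>"
      then have Q: "polyhedron Q" "conic Q" "0 \<in> Q" using Qfam_props[OF fin] by blast+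
      have "closed Q" using Q(1) polyhedron_imp_closed by blast
      moreover have "convex_cone Q" unfolding convex_cone_def using Q polyhedron_imp_convex by blast
      moreover have "closed (At ` Q)" using closed_linear_image_polycone[OF Q(1,2) _ linAt] Q(3) by blast
      ultimately show "closed Q \<and> convex_cone Q \<and> closed (At ` Q)" by blast
    qed
    show "\<And>(r::nat\<Rightarrow>nat) Q. strict_mono r \<Longrightarrow> \<forall>n. Qk (r n) = Q \<Longrightarrow> Q \<subseteq> K" using QK by blast
    show "\<forall>k. Qk k \<in> Qfam \<S> \<and> (lk \<circ> r0) k \<in> Qk k"
    proof
      fix k
      have "Qk k \<in> Qfam \<S>" unfolding Qk_def T0 using RN_in_Qfam[OF fin] wT[of k] unfolding T0 by blast
      moreover have "(lk \<circ> r0) k \<in> Qk k" using RGk[of "k + N"] RNeq[of k] by (simp add: r0_def)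
      ultimately show "Qk k \<in> Qfam \<S> \<and> (lk \<circ> r0) k \<in> Qk k" by blast
    qed
    show "\<forall>k. 0 < (tk \<circ> r0) k" using tpos by simp
    show "(tk \<circ> r0) \<longlonglongrightarrow> 0" using LIMSEQ_subseq_LIMSEQ[OF t0 r0] .
    show "(xsk \<circ> r0) \<longlonglongrightarrow> xs" using LIMSEQ_subseq_LIMSEQ[OF A(7) r0] .
    show "\<forall>k. (xsk \<circ> r0) k = At ((lk \<circ> r0) k) + (tk \<circ> r0) k *\<^sub>R Hm ((lk \<circ> r0) k) + (rr \<circ> r0) k"
      using RGk by (simp add: rr_def)
    show "\<forall>k. norm ((rr \<circ> r0) k) \<le> (tk \<circ> r0) k * (\<eta> \<circ> r0) k * norm ((lk \<circ> r0) k)" using rrb by simp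
    show "\<forall>k. 0 \<le> (\<eta> \<circ> r0) k" using eta0 by simp
    show "(\<eta> \<circ> r0) \<longlonglongrightarrow> 0" using LIMSEQ_subseq_LIMSEQ[OF etal r0] .
    show "filterlim (\<lambda>k. norm ((lk \<circ> r0) k)) at_top sequentially"
      using filterlim_compose[OF A(10) filterlim_subseq[OF r0]] by (simp add: o_def)
    show "\<And>y z. At y = 0 \<Longrightarrow> Hm y + At z = 0 \<Longrightarrow> y \<in> K \<Longrightarrow> z \<in> tangent_cone K y \<Longrightarrow> y = 0"
      using qual unfolding At_def Hm_def K_def by blast
  qed
  then show ?thesis unfolding At_def Hm_def K_def .
qed

theorem mainTheorem12:
  fixes g :: "'a::euclidean_space \<Rightarrow> real^'m"
    and Dg :: "'a \<Rightarrow> ('a \<Rightarrow>\<^sub>L (real^'m))"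
    and D2g :: "'a \<Rightarrow> ('a \<Rightarrow>\<^sub>L ('a \<Rightarrow>\<^sub>L (real^'m)))"
    and D :: "(real^'m) set"
    and xb u :: 'a
  assumes g_deriv: "\<And>x. (g has_derivative blinfun_apply (Dg x)) (at x)"
    and Dg_deriv: "\<And>x. (Dg has_derivative blinfun_apply (D2g x)) (at x)"
    and D2g_cont: "continuous_on UNIV D2g"
    and D_closed: "closed D"
    and D_poly: "locally_polyhedral D (g xb)"
    and gph_pt: "(xb, 0) \<in> gph (\<lambda>x. (\<lambda>d. g x - d) ` D)"
    and u_unit: "norm u = 1"
    and qual: "\<And>ys zs. adjoint (blinfun_apply (Dg xb)) ys = 0 \<Longrightarrow>
        adjoint (blinfun_apply (blinfun_apply (D2g xb) u)) ys
          + adjoint (blinfun_apply (Dg xb)) zs = 0 \<Longrightarrow>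
        ys \<in> limiting_normal_cone (tangent_cone D (g xb)) (Dg xb u) \<Longrightarrow>
        zs \<in> tangent_cone (limiting_normal_cone (tangent_cone D (g xb)) (Dg xb u)) ys \<Longrightarrow>
        ys = 0"
  shows
    "((\<forall>xs ys zs.
         xs = adjoint (blinfun_apply (blinfun_apply (D2g xb) u)) ys
                + adjoint (blinfun_apply (Dg xb)) zs
       \<and> ys \<in> limiting_normal_cone (tangent_cone D (g xb)) (Dg xb u)
       \<and> adjoint (blinfun_apply (Dg xb)) ys = 0
       \<and> zs \<in> tangent_cone (limiting_normal_cone (tangent_cone D (g xb)) (Dg xb u)) ys
       \<longrightarrow> (\<exists>lam\<in>limiting_normal_cone D (g xb). xs = adjoint (blinfun_apply (Dg xb)) lam))
      \<longrightarrow> asymptotically_regular (\<lambda>x. (\<lambda>d. g x - d) ` D) xb 0 u)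
   \<and>
     ((\<forall>xs ys zs.
         xs = adjoint (blinfun_apply (blinfun_apply (D2g xb) u)) ys
                + adjoint (blinfun_apply (Dg xb)) zs
       \<and> ys \<in> limiting_normal_cone (tangent_cone D (g xb)) (Dg xb u)
       \<and> adjoint (blinfun_apply (Dg xb)) ys = 0
       \<and> zs \<in> tangent_cone (limiting_normal_cone (tangent_cone D (g xb)) (Dg xb u)) ys
       \<longrightarrow> (\<exists>lam\<in>limiting_normal_cone (tangent_cone D (g xb)) (Dg xb u).
              xs = adjoint (blinfun_apply (Dg xb)) lam))
      \<longrightarrow> strongly_asymptotically_regular (\<lambda>x. (\<lambda>d. g x - d) ` D) xb 0 u)"
proof -
  let ?Phi = "\<lambda>x. (\<lambda>d. g x - d) ` D"
  have pD: "g xb \<in> D" using gph_pt gph_char[of xb 0 g D] by simp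
  obtain \<epsilon> \<S> where eps: "\<epsilon> > 0" and fin: "finite \<S>" "\<forall>S\<in>\<S>. finite S"
     and lr: "\<forall>w. norm w < \<epsilon> \<longrightarrow> (g xb + w \<in> D \<longleftrightarrow> (\<exists>S\<in>\<S>. w \<in> convex_cone hull S))"
    using local_rep[OF D_poly] by blast
  define T0 where "T0 = (\<Union>S\<in>\<S>. convex_cone hull S)"
  have loc: "\<forall>w. norm w < \<epsilon> \<longrightarrow> (g xb + w \<in> D \<longleftrightarrow> w \<in> T0)" using lr unfolding T0_def by blast
  have T0cl: "closed T0" unfolding T0_def using fin by (intro closed_UN) (auto intro: closed_convex_cone_hull)
  have T0co: "conic T0" unfolding T0_def conic_def using conic_convex_cone_hull conicD by blast
  have tang: "tangent_cone D (g xb) = T0" by (rule tangent_eq[OF loc eps T0cl T0co pD])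
  have qual': "\<And>ys zs. adjoint (blinfun_apply (Dg xb)) ys = 0 \<Longrightarrow>
        adjoint (blinfun_apply (blinfun_apply (D2g xb) u)) ys
          + adjoint (blinfun_apply (Dg xb)) zs = 0 \<Longrightarrow>
        ys \<in> limiting_normal_cone T0 (Dg xb u) \<Longrightarrow>
        zs \<in> tangent_cone (limiting_normal_cone T0 (Dg xb u)) ys \<Longrightarrow>
        ys = 0"
    using qual unfolding tang by blast
  have main: "\<exists>y z. xs = adjoint (blinfun_apply (blinfun_apply (D2g xb) u)) y + adjoint (blinfun_apply (Dg xb)) z
       \<and> y \<in> limiting_normal_cone T0 (Dg xb u) \<and> adjoint (blinfun_apply (Dg xb)) y = 0
       \<and> z \<in> tangent_cone (limiting_normal_cone T0 (Dg xb u)) y"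
    if "asym_limit ?Phi xb 0 u xs" for xs
    by (rule MAIN[where g=g and Dg=Dg and D2g=D2g and xb=xb and D=D and u=u and \<epsilon>=\<epsilon> and \<S>=\<S> and xs=xs,
      OF g_deriv Dg_deriv[of xb] eps fin T0_def loc gph_pt qual' that])
  have Dgc: "isCont Dg xb" using has_derivative_continuous[OF Dg_deriv[of xb]] by simp
  show ?thesis
    unfolding tang
  proof (intro conjI impI)
    assume H1: "\<forall>xs ys zs.
         xs = adjoint (blinfun_apply (blinfun_apply (D2g xb) u)) ys
                + adjoint (blinfun_apply (Dg xb)) zs
       \<and> ys \<in> limiting_normal_cone T0 (Dg xb u)
       \<and> adjoint (blinfun_apply (Dg xb)) ys = 0
       \<and> zs \<in> tangent_cone (limiting_normal_cone T0 (Dg xb u)) ys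
       \<longrightarrow> (\<exists>lam\<in>limiting_normal_cone D (g xb). xs = adjoint (blinfun_apply (Dg xb)) lam)"
    show "asymptotically_regular ?Phi xb 0 u"
      unfolding asymptotically_regular_def
    proof (intro allI impI)
      fix xs assume "asym_limit ?Phi xb 0 u xs"
      then obtain y z where yz: "xs = adjoint (blinfun_apply (blinfun_apply (D2g xb) u)) y + adjoint (blinfun_apply (Dg xb)) z
       \<and> y \<in> limiting_normal_cone T0 (Dg xb u) \<and> adjoint (blinfun_apply (Dg xb)) y = 0
       \<and> z \<in> tangent_cone (limiting_normal_cone T0 (Dg xb u)) y" using main by blast
      have "\<exists>lam\<in>limiting_normal_cone D (g xb). xs = adjoint (blinfun_apply (Dg xb)) lam"
        using H1[rule_format, of xs y z] yz by blast
      then obtain lam where lam: "lam \<in> limiting_normal_cone D (g xb)" "xs = adjoint (blinfun_apply (Dg xb)) lam"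
        by blast
      have "xs \<in> limiting_coderiv ?Phi xb 0 lam" using LIM_CODERIV[OF g_deriv lam(1)] lam(2) by simp
      then show "xs \<in> Im (limiting_coderiv ?Phi xb 0)" unfolding Im_def by blast
    qed
  next
    assume H2: "\<forall>xs ys zs.
         xs = adjoint (blinfun_apply (blinfun_apply (D2g xb) u)) ys
                + adjoint (blinfun_apply (Dg xb)) zs
       \<and> ys \<in> limiting_normal_cone T0 (Dg xb u)
       \<and> adjoint (blinfun_apply (Dg xb)) ys = 0
       \<and> zs \<in> tangent_cone (limiting_normal_cone T0 (Dg xb u)) ys
       \<longrightarrow> (\<exists>lam\<in>limiting_normal_cone T0 (Dg xb u).
              xs = adjoint (blinfun_apply (Dg xb)) lam)"
    show "strongly_asymptotically_regular ?Phi xb 0 u"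
      unfolding strongly_asymptotically_regular_def
    proof (intro allI impI)
      fix xs assume "asym_limit ?Phi xb 0 u xs"
      then obtain y z where yz: "xs = adjoint (blinfun_apply (blinfun_apply (D2g xb) u)) y + adjoint (blinfun_apply (Dg xb)) z
       \<and> y \<in> limiting_normal_cone T0 (Dg xb u) \<and> adjoint (blinfun_apply (Dg xb)) y = 0
       \<and> z \<in> tangent_cone (limiting_normal_cone T0 (Dg xb u)) y" using main by blast
      have "\<exists>lam\<in>limiting_normal_cone T0 (Dg xb u). xs = adjoint (blinfun_apply (Dg xb)) lam"
        using H2[rule_format, of xs y z] yz by blast
      then obtain lam where lam: "lam \<in> limiting_normal_cone T0 (Dg xb u)" "xs = adjoint (blinfun_apply (Dg xb)) lam"
        by blast
      have "xs \<in> dir_limiting_coderiv ?Phi xb 0 u 0 lam"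
        using DIR_CODERIV[OF g_deriv Dgc loc eps T0co u_unit lam(1)] lam(2) by simp
      then show "xs \<in> Im (dir_limiting_coderiv ?Phi xb 0 u 0)" unfolding Im_def by blast
    qed
  qed
qed

end
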